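(* Let $\mathbb{F}$ be a field with $\operatorname{char}(\mathbb{F})\neq 2$ and let $G$ be a non-abelian group with a group involution $\ast$ and a non-identity orientation $\sigma:G\to\{\pm1\}$ such that $gg^\ast\in N=\ker\sigma$ for all $g\in G$. Then $\mathbb{F}G$ is normal with respect to the oriented group involution $\circledast$ if and only if one of the following holds: (1) $N$ is abelian, $G\setminus N\subseteq G^+$, and $n^\ast=a^{-1}na=ana^{-1}$ for all $n\in N$ and all $a\in G\setminus N$; (2) $N$ and $G$ are LC-groups, $G$ has a unique non-identity commutator $s$, there exists $g_0\in(G\setminus N)\cap\zeta(G)$ with $g_0^\ast=sg_0$, and $\ast$ is given by $g^\ast=g$ if $g\in N\cap\zeta(G)$ or $g\in(G\setminus N)\setminus\zeta(G)$, and $g^\ast=sg$ otherwise.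
   Context: A group involution on $G$ is a map $\ast:G\to G$ with $(gh)^\ast=h^\ast g^\ast$ and $(g^\ast)^\ast=g$. An orientation is a group homomorphism $\sigma:G\to\{\pm1\}$. The oriented group involution is $(\sum_g\alpha_g g)^\circledast=\sum_g\alpha_g\sigma(g)g^\ast$ on $\mathbb{F}G$ (an algebra involution because $gg^\ast\in\ker\sigma$). $\mathbb{F}G$ is normal if $\alpha\alpha^\circledast=\alpha^\circledast\alpha$ for all $\alpha\in\mathbb{F}G$. $G^+=\{g\in G:g^\ast=g\}$, $\zeta(G)$ is the center of $G$, $(g,h)=g^{-1}h^{-1}gh$, and "unique non-identity commutator $s$" means $\{(g,h):g,h\in G\}=\{1,s\}$. A group $H$ is an LC-group if it is non-abelian and for all $g,h\in H$: $gh=hg$ iff at least one of $g,h,gh$ lies in $\zeta(H)$. *)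

theory Defs
  imports "HOL-Algebra.Group"
begin

definition grp_center :: "('a, 'b) monoid_scheme \<Rightarrow> 'a set \<Rightarrow> 'a set" where
  "grp_center G H = {z \<in> H. \<forall>x \<in> H. z \<otimes>\<^bsub>G\<^esub> x = x \<otimes>\<^bsub>G\<^esub> z}"

definition abelian_on :: "('a, 'b) monoid_scheme \<Rightarrow> 'a set \<Rightarrow> bool" where
  "abelian_on G H \<longleftrightarrow> (\<forall>x \<in> H. \<forall>y \<in> H. x \<otimes>\<^bsub>G\<^esub> y = y \<otimes>\<^bsub>G\<^esub> x)"

definition LC_group :: "('a, 'b) monoid_scheme \<Rightarrow> 'a set \<Rightarrow> bool" where
  "LC_group G H \<longleftrightarrow> \<not> abelian_on G H \<and>
     (\<forall>g \<in> H. \<forall>h \<in> H. g \<otimes>\<^bsub>G\<^esub> h = h \<otimes>\<^bsub>G\<^esub> g \<longleftrightarrow>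
        (g \<in> grp_center G H \<or> h \<in> grp_center G H \<or> g \<otimes>\<^bsub>G\<^esub> h \<in> grp_center G H))"

definition commutator :: "('a, 'b) monoid_scheme \<Rightarrow> 'a \<Rightarrow> 'a \<Rightarrow> 'a" where
  "commutator G g h = inv\<^bsub>G\<^esub> g \<otimes>\<^bsub>G\<^esub> inv\<^bsub>G\<^esub> h \<otimes>\<^bsub>G\<^esub> g \<otimes>\<^bsub>G\<^esub> h"

definition commutators :: "('a, 'b) monoid_scheme \<Rightarrow> 'a set" where
  "commutators G = {commutator G g h | g h. g \<in> carrier G \<and> h \<in> carrier G}"

definition group_involution :: "('a, 'b) monoid_scheme \<Rightarrow> ('a \<Rightarrow> 'a) \<Rightarrow> bool" where
  "group_involution G st \<longleftrightarrow> (\<forall>g \<in> carrier G. st g \<in> carrier G) \<and>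
     (\<forall>g \<in> carrier G. \<forall>h \<in> carrier G. st (g \<otimes>\<^bsub>G\<^esub> h) = st h \<otimes>\<^bsub>G\<^esub> st g) \<and>
     (\<forall>g \<in> carrier G. st (st g) = g)"

definition orientation :: "('a, 'b) monoid_scheme \<Rightarrow> ('a \<Rightarrow> int) \<Rightarrow> bool" where
  "orientation G \<sigma> \<longleftrightarrow> (\<forall>g \<in> carrier G. \<sigma> g \<in> {1, -1}) \<and>
     (\<forall>g \<in> carrier G. \<forall>h \<in> carrier G. \<sigma> (g \<otimes>\<^bsub>G\<^esub> h) = \<sigma> g * \<sigma> h)"

definition group_algebra :: "('a, 'b) monoid_scheme \<Rightarrow> ('a \<Rightarrow> 'f::field) set" where
  "group_algebra G = {\<alpha>. (\<forall>x. x \<notin> carrier G \<longrightarrow> \<alpha> x = 0) \<and> finite {x. \<alpha> x \<noteq> 0}}"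

definition ga_mult :: "('a, 'b) monoid_scheme \<Rightarrow> ('a \<Rightarrow> 'f::field) \<Rightarrow> ('a \<Rightarrow> 'f) \<Rightarrow> ('a \<Rightarrow> 'f)" where
  "ga_mult G \<alpha> \<beta> = (\<lambda>x. if x \<in> carrier G then
      (\<Sum>g \<in> {g \<in> carrier G. \<alpha> g \<noteq> 0}. \<alpha> g * \<beta> (inv\<^bsub>G\<^esub> g \<otimes>\<^bsub>G\<^esub> x)) else 0)"

text \<open>Oriented involution: (\<Sum> \<alpha>_g g)^\<circledast> = \<Sum> \<alpha>_g \<sigma>(g) g^*; coefficient at h is
  \<alpha>(h^*) \<sigma>(h^*), as * is a bijection of the carrier.\<close>
definition oriented_inv :: "('a, 'b) monoid_scheme \<Rightarrow> ('a \<Rightarrow> 'a) \<Rightarrow> ('a \<Rightarrow> int) \<Rightarrow> ('a \<Rightarrow> 'f::field) \<Rightarrow> ('a \<Rightarrow> 'f)" where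
  "oriented_inv G st \<sigma> \<alpha> = (\<lambda>h. if h \<in> carrier G then of_int (\<sigma> (st h)) * \<alpha> (st h) else 0)"

definition ga_normal :: "('a, 'b) monoid_scheme \<Rightarrow> ('a \<Rightarrow> 'a) \<Rightarrow> ('a \<Rightarrow> int) \<Rightarrow> ('a \<Rightarrow> 'f::field) set \<Rightarrow> bool" where
  "ga_normal G st \<sigma> FG \<longleftrightarrow> (\<forall>\<alpha> \<in> FG.
      ga_mult G \<alpha> (oriented_inv G st \<sigma> \<alpha>) = ga_mult G (oriented_inv G st \<sigma> \<alpha>) \<alpha>)"

end

theory Submission
  imports Defs
begin

lemma (in group) comm_inv_left:
  assumes "x \<in> carrier G" "y \<in> carrier G" "x \<otimes> y = y \<otimes> x"
  shows "inv x \<otimes> y = y \<otimes> inv x"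
proof -
  have "inv x \<otimes> y = inv x \<otimes> (y \<otimes> x) \<otimes> inv x" using assms by (simp add: m_assoc)
  also have "\<dots> = inv x \<otimes> (x \<otimes> y) \<otimes> inv x" by (simp only: assms(3))
  also have "\<dots> = y \<otimes> inv x" using assms(1,2) by (simp add: m_assoc[symmetric])
  finally show ?thesis .
qed

lemma (in group) inv_cancel1[simp]: "x \<in> carrier G \<Longrightarrow> y \<in> carrier G \<Longrightarrow> inv x \<otimes> (x \<otimes> y) = y"
  by (simp add: m_assoc[symmetric])
lemma (in group) inv_cancel2[simp]: "x \<in> carrier G \<Longrightarrow> y \<in> carrier G \<Longrightarrow> x \<otimes> (inv x \<otimes> y) = y"
  by (simp add: m_assoc[symmetric])

lemma (in group) comm_self_prod:
  assumes "g \<in> carrier G" "h \<in> carrier G"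
  shows "g \<otimes> (g \<otimes> h) = (g \<otimes> h) \<otimes> g \<longleftrightarrow> g \<otimes> h = h \<otimes> g"
  using assms by (simp add: m_assoc)

lemma (in group) eq_conj1:
  assumes "a \<in> carrier G" "n \<in> carrier G" "m \<in> carrier G"
  shows "a \<otimes> n = m \<otimes> a \<longleftrightarrow> m = a \<otimes> n \<otimes> inv a"
  using inv_solve_right[of m "a \<otimes> n" a] assms by auto

lemma (in group) eq_conj2:
  assumes "a \<in> carrier G" "n \<in> carrier G" "m \<in> carrier G"
  shows "a \<otimes> n = m \<otimes> a \<longleftrightarrow> n = inv a \<otimes> m \<otimes> a"
  using inv_solve_left[of n a "m \<otimes> a"] assms by (auto simp: m_assoc)

lemma (in group) comm_of_prod1:
  assumes "a \<in> carrier G" "b \<in> carrier G" "c \<in> carrier G"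
    and "c \<otimes> a = a \<otimes> c" "c \<otimes> (a \<otimes> b) = (a \<otimes> b) \<otimes> c"
  shows "c \<otimes> b = b \<otimes> c"
proof -
  have "a \<otimes> (c \<otimes> b) = (c \<otimes> a) \<otimes> b" using assms(1-4) by (simp add: m_assoc)
  also have "\<dots> = c \<otimes> (a \<otimes> b)" using assms(1-3) by (simp add: m_assoc)
  also have "\<dots> = a \<otimes> (b \<otimes> c)" using assms(5) assms(1-3) by (simp add: m_assoc)
  finally show ?thesis using assms(1-3) by simp
qed

lemma (in group) comm_of_prod2:
  assumes "a \<in> carrier G" "b \<in> carrier G" "c \<in> carrier G"
    and "c \<otimes> b = b \<otimes> c" "c \<otimes> (a \<otimes> b) = (a \<otimes> b) \<otimes> c"
  shows "c \<otimes> a = a \<otimes> c"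
proof -
  have "c \<otimes> a \<otimes> b = c \<otimes> (a \<otimes> b)" using assms by (simp add: m_assoc)
  also have "\<dots> = a \<otimes> (b \<otimes> c)" using assms by (simp add: m_assoc)
  also have "\<dots> = a \<otimes> c \<otimes> b" using assms by (simp add: m_assoc)
  finally show ?thesis using assms right_cancel by (meson m_closed)
qed

lemma (in group) prod_comm:
  assumes "c \<in> grp_center G (carrier G)" "c' \<in> grp_center G (carrier G)"
    and "m \<in> carrier G" "m' \<in> carrier G" "m \<otimes> m' = m' \<otimes> m"
  shows "(c \<otimes> m) \<otimes> (c' \<otimes> m') = (c' \<otimes> m') \<otimes> (c \<otimes> m)"
proof -
  have c: "c \<in> carrier G" "\<And>x. x \<in> carrier G \<Longrightarrow> c \<otimes> x = x \<otimes> c"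
    using assms(1) unfolding grp_center_def by auto
  have c': "c' \<in> carrier G" "\<And>x. x \<in> carrier G \<Longrightarrow> c' \<otimes> x = x \<otimes> c'"
    using assms(2) unfolding grp_center_def by auto
  have "(c \<otimes> m) \<otimes> (c' \<otimes> m') = c \<otimes> ((m \<otimes> c') \<otimes> m')" using c(1) c'(1) assms(3-4) by (simp add: m_assoc)
  also have "\<dots> = c \<otimes> ((c' \<otimes> m) \<otimes> m')" by (simp only: c'(2)[OF assms(3)])
  also have "\<dots> = (c \<otimes> c') \<otimes> (m \<otimes> m')" using c(1) c'(1) assms(3-4) by (simp add: m_assoc)
  also have "\<dots> = (c' \<otimes> c) \<otimes> (m' \<otimes> m)" using c(2)[of c'] c'(1) assms(5) by simp
  also have "\<dots> = c' \<otimes> ((c \<otimes> m') \<otimes> m)" using c(1) c'(1) assms(3-4) by (simp add: m_assoc)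
  also have "\<dots> = c' \<otimes> ((m' \<otimes> c) \<otimes> m)" by (simp only: c(2)[OF assms(4)])
  also have "\<dots> = (c' \<otimes> m') \<otimes> (c \<otimes> m)" using c(1) c'(1) assms(3-4) by (simp add: m_assoc)
  finally show ?thesis .
qed

lemma (in group) zc_comm: "g \<in> grp_center G (carrier G) \<Longrightarrow> h \<in> carrier G \<Longrightarrow> g \<otimes> h = h \<otimes> g"
  unfolding grp_center_def by blast

lemma (in group) zc_prod_comm: "g \<in> carrier G \<Longrightarrow> h \<in> carrier G \<Longrightarrow> g \<otimes> h \<in> grp_center G (carrier G) \<Longrightarrow> g \<otimes> h = h \<otimes> g"
proof -
  assume a: "g \<in> carrier G" "h \<in> carrier G" "g \<otimes> h \<in> grp_center G (carrier G)"
  then have "g \<otimes> (g \<otimes> h) = (g \<otimes> h) \<otimes> g" using zc_comm[of "g \<otimes> h" g] by simp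
  then show ?thesis using comm_self_prod a by blast
qed

lemma (in group) commutator_form: "g \<in> carrier G \<Longrightarrow> h \<in> carrier G \<Longrightarrow>
  commutator G g h = inv (h \<otimes> g) \<otimes> (g \<otimes> h)"
  unfolding commutator_def by (simp add: inv_mult_group m_assoc)

lemma (in group) commutator_closed: "g \<in> carrier G \<Longrightarrow> h \<in> carrier G \<Longrightarrow> commutator G g h \<in> carrier G"
  unfolding commutator_def by simp

lemma (in group) commutator_one: "g \<in> carrier G \<Longrightarrow> h \<in> carrier G \<Longrightarrow>
  commutator G g h = \<one> \<longleftrightarrow> g \<otimes> h = h \<otimes> g"
  using commutator_form[of g h] inv_solve_left'[of \<one> "h \<otimes> g" "g \<otimes> h"] by simp

lemma (in group) commutator_swap: "g \<in> carrier G \<Longrightarrow> h \<in> carrier G \<Longrightarrow>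
  commutator G h g = inv (commutator G g h)"
  using commutator_form[of g h] commutator_form[of h g] by (simp add: inv_mult_group)

lemma (in group) commutator_self: "x \<in> carrier G \<Longrightarrow> y \<in> carrier G \<Longrightarrow> commutator G x y = y \<Longrightarrow> y = \<one>"
proof -
  assume x: "x \<in> carrier G" and y: "y \<in> carrier G" and c: "commutator G x y = y"
  have "(inv x \<otimes> inv y \<otimes> x) \<otimes> y = \<one> \<otimes> y" using c y unfolding commutator_def by simp
  then have "inv x \<otimes> inv y \<otimes> x = \<one>" using x y right_cancel[of y "inv x \<otimes> inv y \<otimes> x" \<one>] by simp
  then have "x \<otimes> (inv x \<otimes> (inv y \<otimes> x)) = x \<otimes> \<one>" using x y by (simp add: m_assoc)
  then have "inv y \<otimes> x = x" using x y by simp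
  then show "y = \<one>" using x y by simp
qed

locale oset = group G for G (structure) +
  fixes st :: "'a \<Rightarrow> 'a" and \<sigma> :: "'a \<Rightarrow> int" and N :: "'a set"
  assumes invol: "group_involution G st"
    and ori: "orientation G \<sigma>"
    and N_def: "N = {g \<in> carrier G. \<sigma> g = 1}"
    and ggst: "\<forall>g \<in> carrier G. g \<otimes> st g \<in> N"
begin

lemma st_closed[simp]: "g \<in> carrier G \<Longrightarrow> st g \<in> carrier G"
  using invol unfolding group_involution_def by blast
lemma st_mult: "g \<in> carrier G \<Longrightarrow> h \<in> carrier G \<Longrightarrow> st (g \<otimes> h) = st h \<otimes> st g"
  using invol unfolding group_involution_def by blast
lemma st_st[simp]: "g \<in> carrier G \<Longrightarrow> st (st g) = g"
  using invol unfolding group_involution_def by blast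
lemma st_one[simp]: "st \<one> = \<one>"
proof -
  have "st \<one> = st \<one> \<otimes> st \<one>" using st_mult[of \<one> \<one>] by simp
  then show ?thesis using r_cancel_one'[of "st \<one>" "st \<one>"] by simp
qed
lemma st_inv: "g \<in> carrier G \<Longrightarrow> st (inv g) = inv (st g)"
proof -
  assume g: "g \<in> carrier G"
  have "st (inv g) \<otimes> st g = \<one>" using st_mult[of g "inv g"] g by simp
  then show ?thesis using g inv_equality[of "st (inv g)" "st g"] by simp
qed
lemma st_inj: "g \<in> carrier G \<Longrightarrow> h \<in> carrier G \<Longrightarrow> st g = st h \<longleftrightarrow> g = h"
proof
  assume "st g = st h" "g \<in> carrier G" "h \<in> carrier G"
  then have "st (st g) = st (st h)" by simp
  then show "g = h" using \<open>g \<in> carrier G\<close> \<open>h \<in> carrier G\<close> by simp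
qed simp

lemma sig_mult[simp]: "g \<in> carrier G \<Longrightarrow> h \<in> carrier G \<Longrightarrow> \<sigma> (g \<otimes> h) = \<sigma> g * \<sigma> h"
  using ori unfolding orientation_def by blast
lemma sig_pm: "g \<in> carrier G \<Longrightarrow> \<sigma> g = 1 \<or> \<sigma> g = -1"
  using ori unfolding orientation_def by blast
lemma sig_one[simp]: "\<sigma> \<one> = 1"
proof -
  have "\<sigma> \<one> = \<sigma> \<one> * \<sigma> \<one>" using sig_mult[of \<one> \<one>] by simp
  then show ?thesis using sig_pm[of \<one>] by auto
qed
lemma sig_inv[simp]: "g \<in> carrier G \<Longrightarrow> \<sigma> (inv g) = \<sigma> g"
proof -
  assume g: "g \<in> carrier G"
  have "\<sigma> g * \<sigma> (inv g) = 1" using sig_mult[of g "inv g"] g by simp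
  then show ?thesis using sig_pm[of g] sig_pm[of "inv g"] g by auto
qed
lemma sig_st[simp]: "g \<in> carrier G \<Longrightarrow> \<sigma> (st g) = \<sigma> g"
proof -
  assume g: "g \<in> carrier G"
  have "\<sigma> (g \<otimes> st g) = 1" using ggst g N_def by auto
  then have "\<sigma> g * \<sigma> (st g) = 1" using g by simp
  then show ?thesis using sig_pm[of g] sig_pm[of "st g"] g by auto
qed
lemma inN: "n \<in> N \<longleftrightarrow> n \<in> carrier G \<and> \<sigma> n = 1"
  using N_def by simp
lemma notN: "a \<in> carrier G \<Longrightarrow> a \<notin> N \<longleftrightarrow> \<sigma> a = -1"
  using N_def sig_pm[of a] by auto

lemma st_N: "n \<in> N \<Longrightarrow> st n \<in> N"
  by (simp add: inN)
lemma N_carr: "n \<in> N \<Longrightarrow> n \<in> carrier G"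
  by (simp add: inN)

definition Rel where
  "Rel g h \<longleftrightarrow> g \<otimes> h = h \<otimes> g \<or>
     (\<sigma> g = \<sigma> h \<and> g \<otimes> h = st g \<otimes> st h \<and> h \<otimes> g = st h \<otimes> st g) \<or>
     (\<sigma> g \<noteq> \<sigma> h \<and> st (g \<otimes> h) = g \<otimes> h \<and> st (h \<otimes> g) = h \<otimes> g)"

lemma L0:
  assumes a: "a \<in> carrier G" "a \<notin> N" and comm: "\<forall>n\<in>N. a \<otimes> n = n \<otimes> a"
  shows "a \<in> grp_center G (carrier G)"
  unfolding grp_center_def
proof (intro CollectI conjI ballI)
  show "a \<in> carrier G" by fact
  fix x assume x: "x \<in> carrier G"
  show "a \<otimes> x = x \<otimes> a"
  proof (cases "x \<in> N")
    case True then show ?thesis using comm by blast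
  next
    case False
    define m where "m = inv a \<otimes> x"
    have "\<sigma> a = -1" "\<sigma> x = -1" using a x False notN by auto
    then have m: "m \<in> N" using a x unfolding m_def by (simp add: inN)
    have xm: "x = a \<otimes> m" using a x unfolding m_def by (simp add: m_assoc[symmetric])
    have "a \<otimes> x = a \<otimes> (m \<otimes> a)" using xm comm m by simp
    also have "\<dots> = x \<otimes> a" using xm a m N_carr by (simp add: m_assoc)
    finally show ?thesis .
  qed
qed

lemma abel_ext:
  assumes a: "a \<in> carrier G" "a \<notin> N" "a \<in> grp_center G (carrier G)" and ab: "abelian_on G N"
  shows "abelian_on G (carrier G)"
proof -
  have one: "\<one> \<in> grp_center G (carrier G)" unfolding grp_center_def by simp
  have dec: "\<exists>c m. c \<in> grp_center G (carrier G) \<and> m \<in> N \<and> x = c \<otimes> m" if x: "x \<in> carrier G" for x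
  proof (cases "x \<in> N")
    case True then show ?thesis using one x by (intro exI[of _ \<one>] exI[of _ x]) simp
  next
    case False
    have "\<sigma> a = -1" "\<sigma> x = -1" using a x False notN by auto
    then show ?thesis using a x
      by (intro exI[of _ a] exI[of _ "inv a \<otimes> x"]) (simp add: inN m_assoc[symmetric])
  qed
  show ?thesis unfolding abelian_on_def
  proof (intro ballI)
    fix x y assume "x \<in> carrier G" "y \<in> carrier G"
    then obtain c m c' m' where "c \<in> grp_center G (carrier G)" "m \<in> N" "x = c \<otimes> m"
      "c' \<in> grp_center G (carrier G)" "m' \<in> N" "y = c' \<otimes> m'" using dec by meson
    moreover have "m \<otimes> m' = m' \<otimes> m" using ab \<open>m \<in> N\<close> \<open>m' \<in> N\<close> unfolding abelian_on_def by blast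
    ultimately show "x \<otimes> y = y \<otimes> x" using prod_comm[of c c' m m'] N_carr by simp
  qed
qed

end

locale oset_rel = oset +
  assumes allR: "\<forall>g\<in>carrier G. \<forall>h\<in>carrier G. Rel g h"
begin

lemma KL:
  assumes a: "a \<in> carrier G" "a \<notin> N" and n: "n \<in> N" and nc: "a \<otimes> n \<noteq> n \<otimes> a"
  shows "st a = a" "st (a \<otimes> n) = a \<otimes> n" "st (n \<otimes> a) = n \<otimes> a"
    "st n = a \<otimes> n \<otimes> inv a" "st n = inv a \<otimes> n \<otimes> a"
proof -
  have nc0: "n \<in> carrier G" using n by (simp add: inN)
  have sa: "\<sigma> a = -1" using a by (simp add: notN)
  have sn: "\<sigma> n = 1" using n by (simp add: inN)
  have "Rel a n" using allR a nc0 by blast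
  then show 1: "st (a \<otimes> n) = a \<otimes> n" and 2: "st (n \<otimes> a) = n \<otimes> a"
    using nc sa sn unfolding Rel_def by auto
  have "Rel a (a \<otimes> n)" using allR a nc0 by simp
  moreover have "a \<otimes> (a \<otimes> n) \<noteq> (a \<otimes> n) \<otimes> a" using comm_self_prod[of a n] a nc0 nc by simp
  moreover have "\<sigma> (a \<otimes> n) = \<sigma> a" using sa sn a nc0 by simp
  ultimately have "a \<otimes> (a \<otimes> n) = st a \<otimes> st (a \<otimes> n)" unfolding Rel_def by auto
  then have "a \<otimes> (a \<otimes> n) = st a \<otimes> (a \<otimes> n)" using 1 by simp
  then show 3: "st a = a" using a nc0 right_cancel[of "a \<otimes> n" a "st a"] by simp
  have "st n \<otimes> a = a \<otimes> n" using 1 3 st_mult[of a n] a nc0 by simp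
  then show "st n = a \<otimes> n \<otimes> inv a" using eq_conj1[of a n "st n"] a nc0 by simp
  have "a \<otimes> st n = n \<otimes> a" using 2 3 st_mult[of n a] a nc0 by simp
  then show "st n = inv a \<otimes> n \<otimes> a" using eq_conj2[of a "st n" n] a nc0 by simp
qed

lemma exists_nc:
  assumes nonab: "\<not> abelian_on G (carrier G)" and ab: "abelian_on G N"
    and a: "a \<in> carrier G" "a \<notin> N"
  shows "\<exists>n\<in>N. a \<otimes> n \<noteq> n \<otimes> a"
  using L0 abel_ext a ab nonab by blast

lemma caseI:
  assumes nonab: "\<not> abelian_on G (carrier G)" and ab: "abelian_on G N"
  shows "abelian_on G N \<and> (\<forall>a \<in> carrier G - N. st a = a) \<and>
       (\<forall>n \<in> N. \<forall>a \<in> carrier G - N.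
          st n = inv a \<otimes> n \<otimes> a \<and> st n = a \<otimes> n \<otimes> inv a)"
proof -
  have A: "st a = a" if a: "a \<in> carrier G - N" for a
  proof -
    obtain n where "n \<in> N" "a \<otimes> n \<noteq> n \<otimes> a" using exists_nc[OF nonab ab, of a] a by blast
    then show "st a = a" using KL(1)[of a n] a by blast
  qed
  have B: "st n = inv a \<otimes> n \<otimes> a \<and> st n = a \<otimes> n \<otimes> inv a" if n: "n \<in> N" and a: "a \<in> carrier G - N" for n a
  proof -
  have nc: "n \<in> carrier G" using n N_carr by blast
  have ac: "a \<in> carrier G" using a by blast
  show "st n = inv a \<otimes> n \<otimes> a \<and> st n = a \<otimes> n \<otimes> inv a"
  proof (cases "a \<otimes> n = n \<otimes> a")
    case False then show ?thesis using KL(4,5)[of a n] a n by blast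
  next
    case True
    obtain m where m: "m \<in> N" "a \<otimes> m \<noteq> m \<otimes> a" using exists_nc[OF nonab ab, of a] a by blast
    have mc: "m \<in> carrier G" using m N_carr by blast
    have nm: "n \<otimes> m \<in> N" using n m by (simp add: inN)
    have "a \<otimes> (n \<otimes> m) \<noteq> (n \<otimes> m) \<otimes> a"
    proof
      assume "a \<otimes> (n \<otimes> m) = (n \<otimes> m) \<otimes> a"
      then have "a \<otimes> m = m \<otimes> a" using comm_of_prod1[of n m a] True mc nc ac by simp
      with m(2) show False by simp
    qed
    then have e1: "st (n \<otimes> m) = inv a \<otimes> (n \<otimes> m) \<otimes> a" using KL(5)[of a "n \<otimes> m"] a nm by blast
    have e2: "st m = inv a \<otimes> m \<otimes> a" using KL(5)[of a m] a m by blast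
    have ian: "inv a \<otimes> n = n \<otimes> inv a" using comm_inv_left[of a n] True ac nc by simp
    have "inv a \<otimes> (n \<otimes> m) \<otimes> a = (inv a \<otimes> n) \<otimes> m \<otimes> a" using ac nc mc by (simp add: m_assoc)
    also have "\<dots> = n \<otimes> (inv a \<otimes> m \<otimes> a)" using ian ac nc mc by (simp add: m_assoc)
    finally have "st (n \<otimes> m) = n \<otimes> st m" using e1 e2 by simp
    moreover have "st (n \<otimes> m) = st n \<otimes> st m"
    proof -
      have "st (n \<otimes> m) = st m \<otimes> st n" using st_mult[of n m] nc mc by simp
      also have "\<dots> = st n \<otimes> st m" using ab st_N n m unfolding abelian_on_def by blast
      finally show ?thesis .
    qed
    ultimately have "st n = n" using right_cancel[of "st m" "st n" n] nc mc by simp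
    moreover have "n = a \<otimes> n \<otimes> inv a" using True ac nc eq_conj1[of a n n] by blast
    moreover have "n = inv a \<otimes> n \<otimes> a" using True ac nc eq_conj2[of a n n] by blast
    ultimately show ?thesis by simp
  qed
  qed
  show ?thesis using A B ab by blast
qed

end

lemma (in oset) inN_inv: "g \<in> N \<Longrightarrow> inv g \<in> N"
  by (simp add: inN)
lemma (in oset) inN_mult: "g \<in> N \<Longrightarrow> h \<in> N \<Longrightarrow> g \<otimes> h \<in> N"
  by (simp add: inN)
lemma (in oset) notN_mult1: "g \<in> carrier G \<Longrightarrow> g \<notin> N \<Longrightarrow> h \<in> N \<Longrightarrow> g \<otimes> h \<notin> N"
  by (simp add: inN)
lemma (in oset) notN_mult2: "g \<in> carrier G \<Longrightarrow> g \<notin> N \<Longrightarrow> h \<in> N \<Longrightarrow> h \<otimes> g \<notin> N"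
  by (simp add: inN)
lemma (in oset) notN_mult3: "g \<in> carrier G \<Longrightarrow> g \<notin> N \<Longrightarrow> h \<in> carrier G \<Longrightarrow> h \<notin> N \<Longrightarrow> g \<otimes> h \<in> N"
  using notN[of g] notN[of h] by (simp add: inN)

lemma grp_center_iff: "z \<in> grp_center G H \<longleftrightarrow> z \<in> H \<and> (\<forall>x\<in>H. z \<otimes>\<^bsub>G\<^esub> x = x \<otimes>\<^bsub>G\<^esub> z)"
  unfolding grp_center_def by simp

locale caseII = oset_rel +
  assumes nab: "\<not> abelian_on G N" and nontriv: "\<exists>g\<in>carrier G. \<sigma> g \<noteq> 1"
begin

abbreviation "Zc \<equiv> grp_center G (carrier G)"
abbreviation "ZN \<equiv> grp_center G N"

lemma P1: "g \<in> carrier G \<Longrightarrow> g \<otimes> st g = st g \<otimes> g"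
proof -
  assume g: "g \<in> carrier G"
  have "Rel g (st g)" using allR g by simp
  then show ?thesis using g unfolding Rel_def by auto
qed

lemma NCN: "g \<in> N \<Longrightarrow> h \<in> N \<Longrightarrow> g \<otimes> h \<noteq> h \<otimes> g \<Longrightarrow> g \<otimes> h = st g \<otimes> st h"
proof -
  assume a: "g \<in> N" "h \<in> N" "g \<otimes> h \<noteq> h \<otimes> g"
  then have "Rel g h" using allR N_carr by blast
  moreover have "\<sigma> g = \<sigma> h" using a by (simp add: inN)
  ultimately show ?thesis using a unfolding Rel_def by auto
qed

definition t where "t g = inv g \<otimes> st g"

lemma JR_A:
  assumes g: "g \<in> N" and h: "h \<in> N" and nc: "g \<otimes> h \<noteq> h \<otimes> g"
  shows "inv (st g) \<otimes> g = t h"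
proof -
  have gc: "g \<in> carrier G" and hc: "h \<in> carrier G" using g h N_carr by auto
  have e: "g \<otimes> h = st g \<otimes> st h" using NCN g h nc by blast
  have "st h = inv (st g) \<otimes> (g \<otimes> h)" using inv_solve_left[of "st h" "st g" "g \<otimes> h"] e gc hc by simp
  then have "st h \<otimes> inv h = inv (st g) \<otimes> (g \<otimes> h) \<otimes> inv h" by simp
  also have "\<dots> = inv (st g) \<otimes> g" using gc hc by (simp add: m_assoc)
  finally have 1: "st h \<otimes> inv h = inv (st g) \<otimes> g" .
  have "inv h \<otimes> st h = st h \<otimes> inv h" using comm_inv_left[of h "st h"] P1[of h] hc by simp
  then show ?thesis using 1 unfolding t_def by simp
qed

lemma JR1:
  assumes g: "g \<in> N" and h: "h \<in> N" and nc: "g \<otimes> h \<noteq> h \<otimes> g"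
  shows "t g = t h" "inv (t g) = t g"
proof -
  have gc: "g \<in> carrier G" and hc: "h \<in> carrier G" using g h N_carr by auto
  have A1: "inv (st g) \<otimes> g = t h" using JR_A g h nc by blast
  have nc2: "inv g \<otimes> h \<noteq> h \<otimes> inv g"
  proof
    assume "inv g \<otimes> h = h \<otimes> inv g"
    then have "inv (inv g) \<otimes> h = h \<otimes> inv (inv g)" using comm_inv_left[of "inv g" h] gc hc by simp
    then show False using nc gc by simp
  qed
  have "inv (st (inv g)) \<otimes> inv g = t h" using JR_A[of "inv g" h] inN_inv g h nc2 by blast
  then have A2: "st g \<otimes> inv g = t h" using gc by (simp add: st_inv)
  have "inv g \<otimes> st g = st g \<otimes> inv g" using comm_inv_left[of g "st g"] P1[of g] gc by simp
  then show tg: "t g = t h" using A2 unfolding t_def by simp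
  have "inv (t g) = inv (st g) \<otimes> g" unfolding t_def using gc by (simp add: inv_mult_group)
  then show "inv (t g) = t g" using A1 tg by simp
qed

lemma notZN: "g \<in> N \<Longrightarrow> g \<notin> ZN \<longleftrightarrow> (\<exists>h\<in>N. g \<otimes> h \<noteq> h \<otimes> g)"
  unfolding grp_center_iff by blast

lemma JRconst:
  assumes g: "g \<in> N" "g \<notin> ZN" and x: "x \<in> N" "x \<notin> ZN"
  shows "t g = t x"
proof -
  obtain u where u: "u \<in> N" "g \<otimes> u \<noteq> u \<otimes> g" using notZN g by blast
  obtain v where v: "v \<in> N" "x \<otimes> v \<noteq> v \<otimes> x" using notZN x by blast
  have gc: "g \<in> carrier G" and xc: "x \<in> carrier G" and uc: "u \<in> carrier G" and vc: "v \<in> carrier G"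
    using g x u v N_carr by auto
  show ?thesis
  proof (cases "x \<otimes> u = u \<otimes> x")
    case False
    then show ?thesis using JR1(1)[of g u] JR1(1)[of x u] g x u by simp
  next
    case xu: True
    show ?thesis
    proof (cases "g \<otimes> v = v \<otimes> g")
      case False
      then show ?thesis using JR1(1)[of g v] JR1(1)[of x v] g x v by simp
    next
      case gv: True
      have y: "u \<otimes> v \<in> N" using u v inN_mult by blast
      have 1: "g \<otimes> (u \<otimes> v) \<noteq> (u \<otimes> v) \<otimes> g"
      proof
        assume "g \<otimes> (u \<otimes> v) = (u \<otimes> v) \<otimes> g"
        then have "g \<otimes> u = u \<otimes> g" using comm_of_prod2[of u v g] gv gc uc vc by simp
        then show False using u by simp
      qed
      have 2: "x \<otimes> (u \<otimes> v) \<noteq> (u \<otimes> v) \<otimes> x"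
      proof
        assume "x \<otimes> (u \<otimes> v) = (u \<otimes> v) \<otimes> x"
        then have "x \<otimes> v = v \<otimes> x" using comm_of_prod1[of u v x] xu xc uc vc by simp
        then show False using v by simp
      qed
      show ?thesis using JR1(1)[OF g(1) y 1] JR1(1)[OF x(1) y 2] by simp
    qed
  qed
qed

definition n0 where "n0 = (SOME g. g \<in> N \<and> g \<notin> ZN)"
definition s where "s = t n0"

lemma ex_nc: "\<exists>g\<in>N. \<exists>h\<in>N. g \<otimes> h \<noteq> h \<otimes> g"
  using nab unfolding abelian_on_def by blast

lemma n0: "n0 \<in> N" "n0 \<notin> ZN"
proof -
  obtain g h where "g \<in> N" "h \<in> N" "g \<otimes> h \<noteq> h \<otimes> g" using ex_nc by blast
  then have "\<exists>g. g \<in> N \<and> g \<notin> ZN" using notZN by blast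
  then have "n0 \<in> N \<and> n0 \<notin> ZN" unfolding n0_def by (rule someI_ex)
  then show "n0 \<in> N" "n0 \<notin> ZN" by auto
qed

lemma t_N: "g \<in> N \<Longrightarrow> t g \<in> N"
  unfolding t_def using inN_mult inN_inv st_N by blast

lemma s_N: "s \<in> N" unfolding s_def using t_N n0 by blast
lemma s_c[simp]: "s \<in> carrier G" using s_N N_carr by blast

lemma s_inv: "inv s = s"
proof -
  obtain h where "h \<in> N" "n0 \<otimes> h \<noteq> h \<otimes> n0" using notZN n0 by blast
  then show ?thesis unfolding s_def using JR1(2)[of n0 h] n0 by blast
qed

lemma s_sq: "s \<otimes> s = \<one>"
proof -
  have "s \<otimes> inv s = \<one>" by simp
  then show ?thesis using s_inv by simp
qed

lemma st_nc: "n \<in> N \<Longrightarrow> n \<notin> ZN \<Longrightarrow> st n = n \<otimes> s"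
proof -
  assume n: "n \<in> N" "n \<notin> ZN"
  then have "t n = s" unfolding s_def using JRconst n0 by blast
  then have "inv n \<otimes> st n = s" unfolding t_def .
  then show ?thesis using inv_solve_left'[of s n "st n"] n N_carr by simp
qed

lemma s_comm: "n \<in> N \<Longrightarrow> n \<notin> ZN \<Longrightarrow> n \<otimes> s = s \<otimes> n"
proof -
  assume n: "n \<in> N" "n \<notin> ZN"
  have nc: "n \<in> carrier G" using n N_carr by blast
  have "n \<otimes> (n \<otimes> s) = (n \<otimes> s) \<otimes> n" using P1[of n] st_nc[OF n] nc by simp
  then show ?thesis using comm_self_prod[of n s] nc by simp
qed

lemma s_ZN: "s \<in> ZN"
  unfolding grp_center_iff
proof (intro conjI ballI)
  show "s \<in> N" by (rule s_N)
  fix x assume x: "x \<in> N"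
  show "s \<otimes> x = x \<otimes> s"
  proof (cases "x \<in> ZN")
    case True then show ?thesis using s_N unfolding grp_center_iff by metis
  next
    case False then show ?thesis using s_comm x by metis
  qed
qed

lemma ncprod: "g \<in> N \<Longrightarrow> h \<in> N \<Longrightarrow> g \<otimes> h \<noteq> h \<otimes> g \<Longrightarrow> g \<otimes> h \<notin> ZN"
proof -
  assume a: "g \<in> N" "h \<in> N" "g \<otimes> h \<noteq> h \<otimes> g"
  have "(g \<otimes> h) \<otimes> g \<noteq> g \<otimes> (g \<otimes> h)" using comm_self_prod[of g h] a N_carr by metis
  then show ?thesis using notZN[of "g \<otimes> h"] inN_mult a by blast
qed

lemma g_ZN_comm: "z \<in> ZN \<Longrightarrow> x \<in> N \<Longrightarrow> z \<otimes> x = x \<otimes> z"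
  unfolding grp_center_iff by blast

lemma comm_sN:
  assumes g: "g \<in> N" and h: "h \<in> N" and nc: "g \<otimes> h \<noteq> h \<otimes> g"
  shows "h \<otimes> g = g \<otimes> h \<otimes> s"
proof -
  have gc: "g \<in> carrier G" and hc: "h \<in> carrier G" using g h N_carr by auto
  have gZ: "g \<notin> ZN" using notZN g h nc by blast
  have hZ: "h \<notin> ZN" using notZN g h nc by metis
  have "g \<otimes> h \<otimes> s = st (g \<otimes> h)" using st_nc[of "g \<otimes> h"] ncprod[OF g h nc] inN_mult g h by simp
  also have "\<dots> = st h \<otimes> st g" using st_mult gc hc by blast
  also have "\<dots> = (h \<otimes> s) \<otimes> (g \<otimes> s)" using st_nc g h gZ hZ by simp
  also have "\<dots> = h \<otimes> ((s \<otimes> g) \<otimes> s)" using gc hc by (simp add: m_assoc)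
  also have "\<dots> = h \<otimes> ((g \<otimes> s) \<otimes> s)" by (simp only: s_comm[OF g gZ])
  also have "\<dots> = h \<otimes> g \<otimes> (s \<otimes> s)" using gc hc by (simp add: m_assoc)
  also have "\<dots> = h \<otimes> g" using gc hc by (simp add: s_sq)
  finally show ?thesis by simp
qed

lemma s_ne1: "s \<noteq> \<one>"
proof
  assume s1: "s = \<one>"
  obtain g h where "g \<in> N" "h \<in> N" "g \<otimes> h \<noteq> h \<otimes> g" using ex_nc by blast
  then show False using comm_sN[of g h] s1 N_carr by auto
qed

lemma ZN_fix: "z \<in> ZN \<Longrightarrow> st z = z"
proof -
  assume z: "z \<in> ZN"
  have zN: "z \<in> N" using z unfolding grp_center_iff by blast
  have zc: "z \<in> carrier G" using zN N_carr by blast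
  have n0c: "n0 \<in> carrier G" using n0 N_carr by blast
  obtain h where h: "h \<in> N" "n0 \<otimes> h \<noteq> h \<otimes> n0" using notZN n0 by blast
  have hc: "h \<in> carrier G" using h N_carr by blast
  have zh: "z \<otimes> h = h \<otimes> z" using g_ZN_comm z h by blast
  have zn0: "z \<otimes> n0 = n0 \<otimes> z" using g_ZN_comm z n0 by blast
  have zs: "z \<otimes> s = s \<otimes> z" using g_ZN_comm z s_N by blast
  have "(z \<otimes> n0) \<otimes> h \<noteq> h \<otimes> (z \<otimes> n0)"
  proof
    assume a: "(z \<otimes> n0) \<otimes> h = h \<otimes> (z \<otimes> n0)"
    have "z \<otimes> (n0 \<otimes> h) = (z \<otimes> n0) \<otimes> h" using zc n0c hc by (simp add: m_assoc)
    also have "\<dots> = (h \<otimes> z) \<otimes> n0" using a zc n0c hc by (simp add: m_assoc)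
    also have "\<dots> = (z \<otimes> h) \<otimes> n0" by (simp only: zh)
    also have "\<dots> = z \<otimes> (h \<otimes> n0)" using zc n0c hc by (simp add: m_assoc)
    finally have "n0 \<otimes> h = h \<otimes> n0" using zc n0c hc by simp
    then show False using h by simp
  qed
  then have zn: "z \<otimes> n0 \<notin> ZN" using notZN[of "z \<otimes> n0"] inN_mult zN n0 h by blast
  have "n0 \<otimes> s \<otimes> st z = st n0 \<otimes> st z" using st_nc n0 by simp
  also have "\<dots> = st (z \<otimes> n0)" using st_mult zc n0c by simp
  also have "\<dots> = z \<otimes> n0 \<otimes> s" using st_nc[of "z \<otimes> n0"] zn inN_mult zN n0 by simp
  also have "\<dots> = n0 \<otimes> (z \<otimes> s)" using zc n0c zn0 by (simp add: m_assoc)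
  also have "\<dots> = n0 \<otimes> (s \<otimes> z)" by (simp only: zs)
  also have "\<dots> = n0 \<otimes> s \<otimes> z" using zc n0c by (simp add: m_assoc)
  finally show ?thesis using zc n0c by (simp add: m_assoc)
qed

lemma ZN_Z: "z \<in> ZN \<Longrightarrow> z \<in> Zc"
proof -
  assume z: "z \<in> ZN"
  have zN: "z \<in> N" using z unfolding grp_center_iff by blast
  have zc: "z \<in> carrier G" using zN N_carr by blast
  show ?thesis unfolding grp_center_iff
  proof (intro conjI ballI)
    show "z \<in> carrier G" by fact
    fix x assume x: "x \<in> carrier G"
    show "z \<otimes> x = x \<otimes> z"
    proof (cases "x \<in> N")
      case True then show ?thesis using g_ZN_comm z by blast
    next
      case False
      show ?thesis
      proof (rule ccontr)
        assume nc: "z \<otimes> x \<noteq> x \<otimes> z"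
        then have "st z = inv x \<otimes> z \<otimes> x" using KL(5)[of x z] x False zN by metis
        then have "z = inv x \<otimes> z \<otimes> x" using ZN_fix z by simp
        then have "x \<otimes> z = z \<otimes> x" using eq_conj2[of x z z] x zc by simp
        then show False using nc by simp
      qed
    qed
  qed
qed

lemma s_Z: "s \<in> Zc" using ZN_Z s_ZN by blast

lemma s_comm_all: "x \<in> carrier G \<Longrightarrow> s \<otimes> x = x \<otimes> s"
  using s_Z unfolding grp_center_iff by blast

lemma s_left: "x \<in> carrier G \<Longrightarrow> y \<in> carrier G \<Longrightarrow> x \<otimes> (s \<otimes> y) = s \<otimes> (x \<otimes> y)"
proof -
  assume x: "x \<in> carrier G" and y: "y \<in> carrier G"
  have "x \<otimes> (s \<otimes> y) = (x \<otimes> s) \<otimes> y" using x y by (simp add: m_assoc)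
  also have "\<dots> = (s \<otimes> x) \<otimes> y" using s_comm_all[OF x] by simp
  also have "\<dots> = s \<otimes> (x \<otimes> y)" using x y by (simp add: m_assoc)
  finally show ?thesis .
qed

lemma s_s: "y \<in> carrier G \<Longrightarrow> s \<otimes> (s \<otimes> y) = y"
  using s_sq by (simp add: m_assoc[symmetric])

lemma ZN_eq: "g \<in> N \<Longrightarrow> g \<in> ZN \<longleftrightarrow> g \<in> Zc"
  using ZN_Z N_carr unfolding grp_center_iff by blast

lemma nonN_nc: "a \<in> carrier G \<Longrightarrow> a \<notin> N \<Longrightarrow> a \<notin> Zc \<Longrightarrow> st a = a"
proof -
  assume a: "a \<in> carrier G" "a \<notin> N" "a \<notin> Zc"
  then obtain n where "n \<in> N" "a \<otimes> n \<noteq> n \<otimes> a" using L0 by blast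
  then show ?thesis using KL(1)[of a n] a by blast
qed

lemma exists_g0: "\<exists>a\<in>carrier G - N. a \<in> Zc"
proof (rule ccontr)
  assume H: "\<not> (\<exists>a\<in>carrier G - N. a \<in> Zc)"
  obtain a where a: "a \<in> carrier G" "\<sigma> a \<noteq> 1" using nontriv by blast
  have aN: "a \<notin> N" using a by (simp add: inN)
  have sta: "st a = a" using nonN_nc a aN H by blast
  have claim: "a \<otimes> n = n \<otimes> s \<otimes> a" if n: "n \<in> N" "n \<notin> ZN" for n
  proof -
    have nc: "n \<in> carrier G" using n N_carr by blast
    have an: "a \<otimes> n \<in> carrier G - N" using notN_mult1[of a n] a aN n nc by simp
    then have "st (a \<otimes> n) = a \<otimes> n" using nonN_nc H by blast
    then show ?thesis using st_mult[of a n] st_nc[OF n] sta a nc by simp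
  qed
  obtain g h where gh: "g \<in> N" "h \<in> N" "g \<otimes> h \<noteq> h \<otimes> g" using ex_nc by blast
  have gc: "g \<in> carrier G" and hc: "h \<in> carrier G" using gh N_carr by auto
  have gZ: "g \<notin> ZN" using notZN gh by blast
  have hZ: "h \<notin> ZN" using notZN gh by metis
  have ghZ: "g \<otimes> h \<notin> ZN" using ncprod gh by blast
  have "a \<otimes> (g \<otimes> h) = (a \<otimes> g) \<otimes> h" using a gc hc by (simp add: m_assoc)
  also have "\<dots> = (g \<otimes> s \<otimes> a) \<otimes> h" using claim gh gZ by simp
  also have "\<dots> = g \<otimes> (s \<otimes> (a \<otimes> h))" using a gc hc by (simp add: m_assoc)
  also have "\<dots> = g \<otimes> (s \<otimes> (h \<otimes> s \<otimes> a))" using claim gh hZ by simp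
  also have "\<dots> = g \<otimes> (s \<otimes> (h \<otimes> (s \<otimes> a)))" using a gc hc by (simp add: m_assoc)
  also have "\<dots> = g \<otimes> (h \<otimes> (s \<otimes> (s \<otimes> a)))" using s_left[of h "s \<otimes> a"] a hc by simp
  also have "\<dots> = g \<otimes> (h \<otimes> a)" using s_s a by simp
  finally have 1: "a \<otimes> (g \<otimes> h) = g \<otimes> h \<otimes> a" using a gc hc by (simp add: m_assoc)
  have 2: "a \<otimes> (g \<otimes> h) = g \<otimes> h \<otimes> s \<otimes> a" using claim[of "g \<otimes> h"] inN_mult gh ghZ by simp
  have "g \<otimes> h \<otimes> a = (g \<otimes> h) \<otimes> (s \<otimes> a)" using 1 2 a gc hc by (simp add: m_assoc)
  then have "\<one> \<otimes> a = s \<otimes> a" using a gc hc by (simp add: m_assoc)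
  then have "\<one> = s" using a right_cancel[of a \<one> s] by simp
  then show False using s_ne1 by simp
qed

lemma nonN_c: "a \<in> carrier G \<Longrightarrow> a \<notin> N \<Longrightarrow> a \<in> Zc \<Longrightarrow> st a = s \<otimes> a"
proof -
  assume a: "a \<in> carrier G" "a \<notin> N" "a \<in> Zc"
  have n0c: "n0 \<in> carrier G" using n0 N_carr by blast
  have acomm: "\<And>x. x \<in> carrier G \<Longrightarrow> a \<otimes> x = x \<otimes> a" using a(3) unfolding grp_center_iff by blast
  have an: "a \<otimes> n0 \<notin> N" using notN_mult1 a n0 by blast
  have anZ: "a \<otimes> n0 \<notin> Zc"
  proof
    assume c: "a \<otimes> n0 \<in> Zc"
    have "n0 \<in> ZN" unfolding grp_center_iff
    proof (intro conjI ballI)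
      show "n0 \<in> N" by (rule n0(1))
      fix x assume x: "x \<in> N"
      have xc: "x \<in> carrier G" using x N_carr by blast
      have "a \<otimes> (n0 \<otimes> x) = (a \<otimes> n0) \<otimes> x" using a n0c xc by (simp add: m_assoc)
      also have "\<dots> = x \<otimes> (a \<otimes> n0)" using c xc unfolding grp_center_iff by blast
      also have "\<dots> = (x \<otimes> a) \<otimes> n0" using a n0c xc by (simp add: m_assoc)
      also have "\<dots> = (a \<otimes> x) \<otimes> n0" using acomm[OF xc] by simp
      also have "\<dots> = a \<otimes> (x \<otimes> n0)" using a n0c xc by (simp add: m_assoc)
      finally show "n0 \<otimes> x = x \<otimes> n0" using a n0c xc by simp
    qed
    then show False using n0 by simp
  qed
  have "st (a \<otimes> n0) = a \<otimes> n0" using nonN_nc[of "a \<otimes> n0"] a n0c an anZ by simp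
  then have "n0 \<otimes> s \<otimes> st a = a \<otimes> n0" using st_mult[of a n0] st_nc n0 a n0c by simp
  also have "\<dots> = n0 \<otimes> a" using acomm[OF n0c] .
  finally have "n0 \<otimes> (s \<otimes> st a) = n0 \<otimes> a" using a n0c by (simp add: m_assoc)
  then have "s \<otimes> st a = a" using a n0c by simp
  then have "s \<otimes> (s \<otimes> st a) = s \<otimes> a" by simp
  then show ?thesis using s_s[of "st a"] a by simp
qed

lemma st_formula: "g \<in> carrier G \<Longrightarrow>
  st g = (if g \<in> N \<inter> Zc \<or> g \<in> (carrier G - N) - Zc then g else s \<otimes> g)"
proof -
  assume g: "g \<in> carrier G"
  show ?thesis
  proof (cases "g \<in> N")
    case True
    show ?thesis
    proof (cases "g \<in> Zc")
      case True
      then show ?thesis using ZN_fix ZN_eq \<open>g \<in> N\<close> by simp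
    next
      case False
      then have "g \<notin> ZN" using ZN_eq \<open>g \<in> N\<close> by blast
      then have "st g = g \<otimes> s" "g \<otimes> s = s \<otimes> g" using st_nc s_comm \<open>g \<in> N\<close> by auto
      then show ?thesis using False \<open>g \<in> N\<close> by simp
    qed
  next
    case False
    then show ?thesis using nonN_nc nonN_c g by auto
  qed
qed

lemma st_nZ: "g \<in> carrier G \<Longrightarrow> g \<notin> Zc \<Longrightarrow> st g = (if g \<in> N then s \<otimes> g else g)"
  using st_formula by auto

lemma key4:
  assumes g: "g \<in> carrier G" "g \<notin> Zc" and h: "h \<in> carrier G" "h \<notin> Zc" and gh: "g \<otimes> h \<notin> Zc"
  shows "h \<otimes> g = s \<otimes> (g \<otimes> h)"
proof -
  have E: "st (g \<otimes> h) = st h \<otimes> st g" using st_mult g h by blast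
  have ghc: "g \<otimes> h \<in> carrier G" using g h by simp
  show ?thesis
  proof (cases "g \<in> N")
    case gN: True
    show ?thesis
    proof (cases "h \<in> N")
      case hN: True
      have "g \<otimes> h \<in> N" using gN hN inN_mult by blast
      then have "s \<otimes> (g \<otimes> h) = (s \<otimes> h) \<otimes> (s \<otimes> g)" using E st_nZ g h gh gN hN by simp
      also have "\<dots> = s \<otimes> (h \<otimes> (s \<otimes> g))" using g h by (simp add: m_assoc)
      also have "\<dots> = s \<otimes> (s \<otimes> (h \<otimes> g))" using s_left[of h g] g h by simp
      also have "\<dots> = h \<otimes> g" using s_s g h by simp
      finally show ?thesis by simp
    next
      case hN: False
      have "g \<otimes> h \<notin> N" using notN_mult2[of h g] gN hN h by blast
      then have "g \<otimes> h = h \<otimes> (s \<otimes> g)" using E st_nZ g h gh gN hN by simp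
      also have "\<dots> = s \<otimes> (h \<otimes> g)" using s_left[of h g] g h by simp
      finally have "s \<otimes> (g \<otimes> h) = s \<otimes> (s \<otimes> (h \<otimes> g))" by simp
      then show ?thesis using s_s g h by simp
    qed
  next
    case gN: False
    show ?thesis
    proof (cases "h \<in> N")
      case hN: True
      have "g \<otimes> h \<notin> N" using notN_mult1[of g h] gN hN g by blast
      then have "g \<otimes> h = (s \<otimes> h) \<otimes> g" using E st_nZ g h gh gN hN by simp
      also have "\<dots> = s \<otimes> (h \<otimes> g)" using g h by (simp add: m_assoc)
      finally have "s \<otimes> (g \<otimes> h) = s \<otimes> (s \<otimes> (h \<otimes> g))" by simp
      then show ?thesis using s_s g h by simp
    next
      case hN: False
      have "g \<otimes> h \<in> N" using notN_mult3[of g h] gN hN g h by blast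
      then have "s \<otimes> (g \<otimes> h) = h \<otimes> g" using E st_nZ g h gh gN hN by simp
      then show ?thesis by simp
    qed
  qed
qed

lemma comm_Z1: "g \<in> Zc \<Longrightarrow> h \<in> carrier G \<Longrightarrow> g \<otimes> h = h \<otimes> g"
  unfolding grp_center_iff by blast

lemma prod_Z_comm: "g \<in> carrier G \<Longrightarrow> h \<in> carrier G \<Longrightarrow> g \<otimes> h \<in> Zc \<Longrightarrow> g \<otimes> h = h \<otimes> g"
proof -
  assume a: "g \<in> carrier G" "h \<in> carrier G" "g \<otimes> h \<in> Zc"
  then have "g \<otimes> (g \<otimes> h) = (g \<otimes> h) \<otimes> g" using comm_Z1[of "g \<otimes> h" g] by simp
  then show ?thesis using comm_self_prod a by blast
qed

lemma comm_sG: "g \<in> carrier G \<Longrightarrow> h \<in> carrier G \<Longrightarrow> g \<otimes> h \<noteq> h \<otimes> g \<Longrightarrow> h \<otimes> g = s \<otimes> (g \<otimes> h)"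
proof -
  assume a: "g \<in> carrier G" "h \<in> carrier G" "g \<otimes> h \<noteq> h \<otimes> g"
  have "g \<notin> Zc" using comm_Z1 a by blast
  moreover have "h \<notin> Zc" using comm_Z1 a by metis
  moreover have "g \<otimes> h \<notin> Zc" using prod_Z_comm a by blast
  ultimately show ?thesis using key4 a by blast
qed

lemma commutator_val: "g \<in> carrier G \<Longrightarrow> h \<in> carrier G \<Longrightarrow>
  commutator G g h = (if g \<otimes> h = h \<otimes> g then \<one> else s)"
proof -
  assume g: "g \<in> carrier G" and h: "h \<in> carrier G"
  have c: "commutator G g h = inv g \<otimes> inv h \<otimes> (g \<otimes> h)"
    unfolding commutator_def using g h by (simp add: m_assoc)
  show ?thesis
  proof (cases "g \<otimes> h = h \<otimes> g")
    case True
    have "inv g \<otimes> inv h \<otimes> (h \<otimes> g) = inv g \<otimes> ((inv h \<otimes> h) \<otimes> g)" using g h by (simp add: m_assoc)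
    then have "inv g \<otimes> inv h \<otimes> (h \<otimes> g) = \<one>" using g h by simp
    then show ?thesis using c True by simp
  next
    case False
    have "h \<otimes> g = s \<otimes> (g \<otimes> h)" using comm_sG g h False by blast
    then have "s \<otimes> (h \<otimes> g) = g \<otimes> h" using s_s g h by simp
    then have "commutator G g h = inv g \<otimes> inv h \<otimes> (s \<otimes> (h \<otimes> g))" using c by simp
    also have "\<dots> = s \<otimes> (inv g \<otimes> inv h \<otimes> (h \<otimes> g))" using s_left g h by simp
    also have "\<dots> = s \<otimes> (inv g \<otimes> ((inv h \<otimes> h) \<otimes> g))" using g h by (simp add: m_assoc)
    also have "\<dots> = s" using g h by simp
    finally show ?thesis using False by simp
  qed
qed

lemma commutators_eq: "commutators G = {\<one>, s}"
proof
  show "commutators G \<subseteq> {\<one>, s}" unfolding commutators_def using commutator_val by auto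
  obtain g h where gh: "g \<in> N" "h \<in> N" "g \<otimes> h \<noteq> h \<otimes> g" using ex_nc by blast
  have "s = commutator G g h" using commutator_val[of g h] gh N_carr by simp
  moreover have "\<one> = commutator G \<one> \<one>" using commutator_val[of \<one> \<one>] by simp
  ultimately show "{\<one>, s} \<subseteq> commutators G" unfolding commutators_def using gh N_carr by blast
qed

lemma LC_G: "LC_group G (carrier G)"
  unfolding LC_group_def
proof (intro conjI ballI)
  show "\<not> abelian_on G (carrier G)" using nab N_carr unfolding abelian_on_def by blast
  fix g h assume g: "g \<in> carrier G" and h: "h \<in> carrier G"
  show "g \<otimes> h = h \<otimes> g \<longleftrightarrow> (g \<in> Zc \<or> h \<in> Zc \<or> g \<otimes> h \<in> Zc)"
  proof
    assume c: "g \<otimes> h = h \<otimes> g"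
    show "g \<in> Zc \<or> h \<in> Zc \<or> g \<otimes> h \<in> Zc"
    proof (rule ccontr)
      assume "\<not> (g \<in> Zc \<or> h \<in> Zc \<or> g \<otimes> h \<in> Zc)"
      then have "h \<otimes> g = s \<otimes> (g \<otimes> h)" using key4 g h by blast
      then have "g \<otimes> h = s \<otimes> (g \<otimes> h)" using c by simp
      then have "s = \<one>" using g h by simp
      then show False using s_ne1 by simp
    qed
  next
    assume "g \<in> Zc \<or> h \<in> Zc \<or> g \<otimes> h \<in> Zc"
    then show "g \<otimes> h = h \<otimes> g" using comm_Z1 prod_Z_comm g h by metis
  qed
qed

lemma LC_N: "LC_group G N"
  unfolding LC_group_def
proof (intro conjI ballI)
  show "\<not> abelian_on G N" by (rule nab)
  fix g h assume g: "g \<in> N" and h: "h \<in> N"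
  have gh: "g \<otimes> h \<in> N" using g h inN_mult by blast
  have "g \<otimes> h = h \<otimes> g \<longleftrightarrow> (g \<in> Zc \<or> h \<in> Zc \<or> g \<otimes> h \<in> Zc)"
    using LC_G g h N_carr unfolding LC_group_def by blast
  then show "g \<otimes> h = h \<otimes> g \<longleftrightarrow> (g \<in> ZN \<or> h \<in> ZN \<or> g \<otimes> h \<in> ZN)"
    using ZN_eq g h gh by blast
qed

lemma cond2:
  "LC_group G N \<and> LC_group G (carrier G) \<and>
       (\<exists>s. s \<noteq> \<one> \<and> commutators G = {\<one>, s} \<and>
         (\<exists>g0 \<in> (carrier G - N) \<inter> Zc. st g0 = s \<otimes> g0) \<and>
         (\<forall>g \<in> carrier G. st g =
            (if g \<in> N \<inter> Zc \<or> g \<in> (carrier G - N) - Zc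
             then g else s \<otimes> g)))"
proof -
  obtain g0 where "g0 \<in> carrier G - N" "g0 \<in> Zc" using exists_g0 by blast
  then have "\<exists>g0 \<in> (carrier G - N) \<inter> Zc. st g0 = s \<otimes> g0" using nonN_c by blast
  then show ?thesis using LC_N LC_G s_ne1 commutators_eq st_formula by blast
qed

end

context oset
begin

definition supp :: "('a \<Rightarrow> 'f::field) \<Rightarrow> 'a set" where "supp \<alpha> = {x. \<alpha> x \<noteq> 0}"

lemma GA_supp:
  assumes "\<alpha> \<in> group_algebra G"
  shows "finite (supp \<alpha>)" "supp \<alpha> \<subseteq> carrier G" "{g \<in> carrier G. \<alpha> g \<noteq> 0} = supp \<alpha>"
  using assms unfolding group_algebra_def supp_def by auto

lemma mult1:
  fixes \<alpha> :: "'a \<Rightarrow> 'f::field"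
  assumes A: "\<alpha> \<in> group_algebra G" and x: "x \<in> carrier G"
  shows "ga_mult G \<alpha> (oriented_inv G st \<sigma> \<alpha>) x =
    (\<Sum>g\<in>supp \<alpha>. \<Sum>h\<in>supp \<alpha>. \<alpha> g * \<alpha> h * of_int (\<sigma> h) * (if g \<otimes> st h = x then 1 else 0))"
proof -
  let ?S = "supp \<alpha>"
  have fin: "finite ?S" and sub: "?S \<subseteq> carrier G" and eq: "{g \<in> carrier G. \<alpha> g \<noteq> 0} = ?S"
    using GA_supp[OF A] by auto
  have "ga_mult G \<alpha> (oriented_inv G st \<sigma> \<alpha>) x =
     (\<Sum>g\<in>?S. \<alpha> g * (of_int (\<sigma> (st (inv g \<otimes> x))) * \<alpha> (st (inv g \<otimes> x))))"
    unfolding ga_mult_def oriented_inv_def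
    apply (simp only: if_P[OF x] eq)
    apply (rule sum.cong[OF refl])
    using sub x by auto
  also have "\<dots> = (\<Sum>g\<in>?S. \<Sum>h\<in>?S. \<alpha> g * \<alpha> h * of_int (\<sigma> h) * (if g \<otimes> st h = x then 1 else 0))"
  proof (rule sum.cong[OF refl])
    fix g assume g: "g \<in> ?S"
    have gc: "g \<in> carrier G" using g sub by blast
    let ?y = "st (inv g \<otimes> x)"
    have "(\<Sum>h\<in>?S. \<alpha> g * \<alpha> h * of_int (\<sigma> h) * (if g \<otimes> st h = x then 1 else 0)) =
          (\<Sum>h\<in>?S. if h = ?y then \<alpha> g * \<alpha> h * of_int (\<sigma> h) else 0)"
    proof (rule sum.cong[OF refl])
      fix h assume h: "h \<in> ?S"
      have hc: "h \<in> carrier G" using h sub by blast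
      have "g \<otimes> st h = x \<longleftrightarrow> st h = inv g \<otimes> x"
        using inv_solve_left[of "st h" g x] gc hc x by auto
      also have "\<dots> \<longleftrightarrow> h = ?y" using st_inj[of h "st (inv g \<otimes> x)"] hc gc x by auto
      finally show "\<alpha> g * \<alpha> h * of_int (\<sigma> h) * (if g \<otimes> st h = x then 1 else 0) =
          (if h = ?y then \<alpha> g * \<alpha> h * of_int (\<sigma> h) else 0)" by simp
    qed
    also have "\<dots> = (if ?y \<in> ?S then \<alpha> g * \<alpha> ?y * of_int (\<sigma> ?y) else 0)"
      using fin by simp
    also have "\<dots> = \<alpha> g * (of_int (\<sigma> ?y) * \<alpha> ?y)"
      unfolding supp_def by auto
    finally show "\<alpha> g * (of_int (\<sigma> ?y) * \<alpha> ?y) =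
      (\<Sum>h\<in>?S. \<alpha> g * \<alpha> h * of_int (\<sigma> h) * (if g \<otimes> st h = x then 1 else 0))" by simp
  qed
  finally show ?thesis .
qed

lemma mult2:
  fixes \<alpha> :: "'a \<Rightarrow> 'f::field"
  assumes A: "\<alpha> \<in> group_algebra G" and x: "x \<in> carrier G"
  shows "ga_mult G (oriented_inv G st \<sigma> \<alpha>) \<alpha> x =
    (\<Sum>g\<in>supp \<alpha>. \<Sum>h\<in>supp \<alpha>. \<alpha> g * \<alpha> h * of_int (\<sigma> h) * (if st h \<otimes> g = x then 1 else 0))"
proof -
  let ?S = "supp \<alpha>"
  let ?b = "oriented_inv G st \<sigma> \<alpha>"
  have fin: "finite ?S" and sub: "?S \<subseteq> carrier G"
    using GA_supp[OF A] by auto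
  have sig0: "of_int (\<sigma> g) \<noteq> (0::'f)" if "g \<in> carrier G" for g
    using sig_pm[OF that] by auto
  have T: "{g \<in> carrier G. ?b g \<noteq> 0} = st ` ?S"
  proof
    show "{g \<in> carrier G. ?b g \<noteq> 0} \<subseteq> st ` ?S"
    proof
      fix g assume "g \<in> {g \<in> carrier G. ?b g \<noteq> 0}"
      then have g: "g \<in> carrier G" "\<alpha> (st g) \<noteq> 0" unfolding oriented_inv_def by auto
      then have "st g \<in> ?S" unfolding supp_def by simp
      then show "g \<in> st ` ?S" using g st_st by (metis image_eqI)
    qed
    show "st ` ?S \<subseteq> {g \<in> carrier G. ?b g \<noteq> 0}"
      using sub sig0 unfolding oriented_inv_def supp_def by auto
  qed
  have inj: "inj_on st ?S" using sub st_inj unfolding inj_on_def by blast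
  have "ga_mult G ?b \<alpha> x = (\<Sum>g'\<in>st ` ?S. ?b g' * \<alpha> (inv g' \<otimes> x))"
    unfolding ga_mult_def using x T by simp
  also have "\<dots> = (\<Sum>h\<in>?S. ?b (st h) * \<alpha> (inv (st h) \<otimes> x))"
    using sum.reindex[OF inj] by simp
  also have "\<dots> = (\<Sum>h\<in>?S. \<Sum>g\<in>?S. \<alpha> g * \<alpha> h * of_int (\<sigma> h) * (if st h \<otimes> g = x then 1 else 0))"
  proof (rule sum.cong[OF refl])
    fix h assume h: "h \<in> ?S"
    have hc: "h \<in> carrier G" using h sub by blast
    let ?y = "inv (st h) \<otimes> x"
    have "(\<Sum>g\<in>?S. \<alpha> g * \<alpha> h * of_int (\<sigma> h) * (if st h \<otimes> g = x then 1 else 0)) =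
          (\<Sum>g\<in>?S. if g = ?y then \<alpha> g * \<alpha> h * of_int (\<sigma> h) else 0)"
    proof (rule sum.cong[OF refl])
      fix g assume g: "g \<in> ?S"
      have gc: "g \<in> carrier G" using g sub by blast
      have "st h \<otimes> g = x \<longleftrightarrow> g = ?y"
        using inv_solve_left[of g "st h" x] gc hc x by auto
      then show "\<alpha> g * \<alpha> h * of_int (\<sigma> h) * (if st h \<otimes> g = x then 1 else 0) =
          (if g = ?y then \<alpha> g * \<alpha> h * of_int (\<sigma> h) else 0)" by simp
    qed
    also have "\<dots> = (if ?y \<in> ?S then \<alpha> ?y * \<alpha> h * of_int (\<sigma> h) else 0)"
      using fin by simp
    also have "\<dots> = ?b (st h) * \<alpha> ?y"
      unfolding supp_def oriented_inv_def using hc by auto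
    finally show "?b (st h) * \<alpha> ?y =
      (\<Sum>g\<in>?S. \<alpha> g * \<alpha> h * of_int (\<sigma> h) * (if st h \<otimes> g = x then 1 else 0))" by simp
  qed
  also have "\<dots> = (\<Sum>g\<in>?S. \<Sum>h\<in>?S. \<alpha> g * \<alpha> h * of_int (\<sigma> h) * (if st h \<otimes> g = x then 1 else 0))"
    by (rule sum.swap)
  finally show ?thesis .
qed

end


lemma field_facts:
  assumes "(2::'f::field) \<noteq> 0"
  shows "(1::'f) + 1 \<noteq> 0" "(-1::'f) \<noteq> 1" "(1::'f) \<noteq> -1" "-(1::'f) - 1 \<noteq> 0"
proof -
  show 1: "(1::'f) + 1 \<noteq> 0" using assms by (simp add: one_add_one)
  show 2: "(-1::'f) \<noteq> 1"
  proof
    assume "(-1::'f) = 1"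
    then have "(1::'f) + 1 = 0" by (metis add.right_inverse)
    then show False using 1 by simp
  qed
  then show "(1::'f) \<noteq> -1" by metis
  show "-(1::'f) - 1 \<noteq> 0" using 1 by (metis add.inverse_inverse diff_0 diff_minus_eq_add minus_add_distrib neg_0_equal_iff_equal)
qed

lemma dist4: "(a::'f::field) * b * c * d + a * b * e * f = a * b * (c * d + e * f)"
  by (simp add: algebra_simps)

lemma sum2: "a \<noteq> b \<Longrightarrow> (\<Sum>u\<in>{a,b}. \<Sum>v\<in>{a,b}. F u v) = F a a + F a b + F b a + (F b b :: 'f::field)"
  by (simp add: algebra_simps)

lemma cancel4: "(a::'f::field) + b + c + d = a + b' + c' + d \<Longrightarrow> b + c = b' + c'"
  by (simp add: algebra_simps)

lemma field_cases1:
  fixes sg sh :: int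
  assumes two: "(2::'f::field) \<noteq> 0" and sg: "sg = 1 \<or> sg = -1" and sh: "sh = 1 \<or> sh = -1"
    and E: "(of_int sh :: 'f) + of_int sg * (if A then 1 else 0) = of_int sg * (if B then 1 else 0)"
  shows "(sg = sh \<longrightarrow> B) \<and> (sg \<noteq> sh \<longrightarrow> A)"
  using sg sh E field_facts[OF two] by (auto split: if_splits)

lemma field_cases2:
  fixes sg sh :: int
  assumes two: "(2::'f::field) \<noteq> 0" and sg: "sg = 1 \<or> sg = -1" and sh: "sh = 1 \<or> sh = -1"
    and E: "(of_int sg :: 'f) * (if A then 1 else 0) = of_int sh + of_int sg * (if B then 1 else 0)"
  shows "(sg = sh \<longrightarrow> A) \<and> (sg \<noteq> sh \<longrightarrow> B)"
  using sg sh E field_facts[OF two] by (auto split: if_splits)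


context oset
begin

lemma normal_iff_LR:
  "ga_normal G st \<sigma> (group_algebra G :: ('a \<Rightarrow> 'f::field) set) \<longleftrightarrow>
   (\<forall>\<alpha>\<in>(group_algebra G :: ('a \<Rightarrow> 'f) set). \<forall>x\<in>carrier G.
     (\<Sum>g\<in>supp \<alpha>. \<Sum>h\<in>supp \<alpha>. \<alpha> g * \<alpha> h * of_int (\<sigma> h) * (if g \<otimes> st h = x then 1 else 0)) =
     (\<Sum>g\<in>supp \<alpha>. \<Sum>h\<in>supp \<alpha>. \<alpha> g * \<alpha> h * of_int (\<sigma> h) * (if st h \<otimes> g = x then 1 else 0)))"
proof -
  have "ga_mult G \<alpha> (oriented_inv G st \<sigma> \<alpha>) = ga_mult G (oriented_inv G st \<sigma> \<alpha>) \<alpha> \<longleftrightarrow>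
     (\<forall>x\<in>carrier G.
     (\<Sum>g\<in>supp \<alpha>. \<Sum>h\<in>supp \<alpha>. \<alpha> g * \<alpha> h * of_int (\<sigma> h) * (if g \<otimes> st h = x then 1 else 0)) =
     (\<Sum>g\<in>supp \<alpha>. \<Sum>h\<in>supp \<alpha>. \<alpha> g * \<alpha> h * of_int (\<sigma> h) * (if st h \<otimes> g = x then 1 else 0)))"
    if A: "\<alpha> \<in> (group_algebra G :: ('a \<Rightarrow> 'f) set)" for \<alpha>
  proof
    assume "ga_mult G \<alpha> (oriented_inv G st \<sigma> \<alpha>) = ga_mult G (oriented_inv G st \<sigma> \<alpha>) \<alpha>"
    show "\<forall>x\<in>carrier G.
     (\<Sum>g\<in>supp \<alpha>. \<Sum>h\<in>supp \<alpha>. \<alpha> g * \<alpha> h * of_int (\<sigma> h) * (if g \<otimes> st h = x then 1 else 0)) =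
     (\<Sum>g\<in>supp \<alpha>. \<Sum>h\<in>supp \<alpha>. \<alpha> g * \<alpha> h * of_int (\<sigma> h) * (if st h \<otimes> g = x then 1 else 0))"
    proof (intro ballI)
      fix x assume x: "x \<in> carrier G"
      have "ga_mult G \<alpha> (oriented_inv G st \<sigma> \<alpha>) x = ga_mult G (oriented_inv G st \<sigma> \<alpha>) \<alpha> x"
        using \<open>ga_mult G \<alpha> (oriented_inv G st \<sigma> \<alpha>) = ga_mult G (oriented_inv G st \<sigma> \<alpha>) \<alpha>\<close> by simp
      then show "(\<Sum>g\<in>supp \<alpha>. \<Sum>h\<in>supp \<alpha>. \<alpha> g * \<alpha> h * of_int (\<sigma> h) * (if g \<otimes> st h = x then 1 else 0)) =
     (\<Sum>g\<in>supp \<alpha>. \<Sum>h\<in>supp \<alpha>. \<alpha> g * \<alpha> h * of_int (\<sigma> h) * (if st h \<otimes> g = x then 1 else 0))"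
        unfolding mult1[OF A x] mult2[OF A x] .
    qed
  next
    assume H: "\<forall>x\<in>carrier G.
     (\<Sum>g\<in>supp \<alpha>. \<Sum>h\<in>supp \<alpha>. \<alpha> g * \<alpha> h * of_int (\<sigma> h) * (if g \<otimes> st h = x then 1 else 0)) =
     (\<Sum>g\<in>supp \<alpha>. \<Sum>h\<in>supp \<alpha>. \<alpha> g * \<alpha> h * of_int (\<sigma> h) * (if st h \<otimes> g = x then 1 else 0))"
    show "ga_mult G \<alpha> (oriented_inv G st \<sigma> \<alpha>) = ga_mult G (oriented_inv G st \<sigma> \<alpha>) \<alpha>"
    proof
      fix x
      show "ga_mult G \<alpha> (oriented_inv G st \<sigma> \<alpha>) x = ga_mult G (oriented_inv G st \<sigma> \<alpha>) \<alpha> x"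
      proof (cases "x \<in> carrier G")
        case True then show ?thesis using mult1[OF A True] mult2[OF A True] H by simp
      next
        case False then show ?thesis unfolding ga_mult_def by simp
      qed
    qed
  qed
  then show ?thesis unfolding ga_normal_def by blast
qed

lemma Id_lemma:
  assumes g: "g \<in> carrier G" and h: "h \<in> carrier G" and R: "Rel g (st h)"
  shows "(of_int (\<sigma> h) :: 'f::field) * (if g \<otimes> st h = x then 1 else 0) + of_int (\<sigma> g) * (if h \<otimes> st g = x then 1 else 0) =
         of_int (\<sigma> h) * (if st h \<otimes> g = x then 1 else 0) + of_int (\<sigma> g) * (if st g \<otimes> h = x then 1 else 0)"
proof -
  define k where "k = st h"
  have kc: "k \<in> carrier G" and hk: "h = st k" and sk: "\<sigma> k = \<sigma> h" using h unfolding k_def by auto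
  have R': "Rel g k" using R unfolding k_def .
  have m1: "st (g \<otimes> k) = h \<otimes> st g" using st_mult[OF g kc] hk by simp
  have m2: "st (k \<otimes> g) = st g \<otimes> h" using st_mult[OF kc g] hk by simp
  show ?thesis
  proof (cases "g \<otimes> k = k \<otimes> g")
    case True
    then have "h \<otimes> st g = st g \<otimes> h" using m1 m2 by simp
    then show ?thesis using True by (simp add: k_def)
  next
    case nc: False
    show ?thesis
    proof (cases "\<sigma> g = \<sigma> k")
      case True
      then have e1: "g \<otimes> k = st g \<otimes> h" and e2: "k \<otimes> g = h \<otimes> st g" using R' nc hk unfolding Rel_def by auto
      show ?thesis using True sk e1 e2 by (simp add: k_def algebra_simps)
    next
      case False
      then have e1: "h \<otimes> st g = g \<otimes> k" and e2: "st g \<otimes> h = k \<otimes> g" using R' nc m1 m2 unfolding Rel_def by auto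
      have "\<sigma> g = - \<sigma> h" using False sk sig_pm[OF g] sig_pm[OF h] by auto
      then show ?thesis using e1 e2 by (simp add: k_def algebra_simps)
    qed
  qed
qed

end


context oset
begin

lemma normal_from_Rel:
  assumes two: "(2::'f::field) \<noteq> 0" and R: "\<forall>g\<in>carrier G. \<forall>h\<in>carrier G. Rel g h"
  shows "ga_normal G st \<sigma> (group_algebra G :: ('a \<Rightarrow> 'f) set)"
  unfolding normal_iff_LR
proof (intro ballI)
  fix \<alpha> :: "'a \<Rightarrow> 'f" and x
  assume A: "\<alpha> \<in> group_algebra G" and x: "x \<in> carrier G"
  let ?S = "supp \<alpha>"
  have sub: "?S \<subseteq> carrier G" using GA_supp[OF A] by auto
  define L where "L = (\<Sum>g\<in>?S. \<Sum>h\<in>?S. \<alpha> g * \<alpha> h * of_int (\<sigma> h) * (if g \<otimes> st h = x then 1 else (0::'f)))"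
  define L' where "L' = (\<Sum>g\<in>?S. \<Sum>h\<in>?S. \<alpha> g * \<alpha> h * of_int (\<sigma> g) * (if h \<otimes> st g = x then 1 else (0::'f)))"
  define R0 where "R0 = (\<Sum>g\<in>?S. \<Sum>h\<in>?S. \<alpha> g * \<alpha> h * of_int (\<sigma> h) * (if st h \<otimes> g = x then 1 else (0::'f)))"
  define R' where "R' = (\<Sum>g\<in>?S. \<Sum>h\<in>?S. \<alpha> g * \<alpha> h * of_int (\<sigma> g) * (if st g \<otimes> h = x then 1 else (0::'f)))"
  have LL: "L' = L"
  proof -
    have "L' = (\<Sum>h\<in>?S. \<Sum>g\<in>?S. \<alpha> g * \<alpha> h * of_int (\<sigma> g) * (if h \<otimes> st g = x then 1 else (0::'f)))"
      unfolding L'_def by (rule sum.swap)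
    also have "\<dots> = L" unfolding L_def by (intro sum.cong refl) (simp add: mult_ac)
    finally show ?thesis .
  qed
  have RR: "R' = R0"
  proof -
    have "R' = (\<Sum>h\<in>?S. \<Sum>g\<in>?S. \<alpha> g * \<alpha> h * of_int (\<sigma> g) * (if st g \<otimes> h = x then 1 else (0::'f)))"
      unfolding R'_def by (rule sum.swap)
    also have "\<dots> = R0" unfolding R0_def by (intro sum.cong refl) (simp add: mult_ac)
    finally show ?thesis .
  qed
  have "L + L' = (\<Sum>g\<in>?S. \<Sum>h\<in>?S. \<alpha> g * \<alpha> h * of_int (\<sigma> h) * (if g \<otimes> st h = x then 1 else (0::'f))
         + \<alpha> g * \<alpha> h * of_int (\<sigma> g) * (if h \<otimes> st g = x then 1 else (0::'f)))"
    unfolding L_def L'_def by (simp only: sum.distrib)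
  also have "\<dots> = (\<Sum>g\<in>?S. \<Sum>h\<in>?S. \<alpha> g * \<alpha> h * of_int (\<sigma> h) * (if st h \<otimes> g = x then 1 else (0::'f))
         + \<alpha> g * \<alpha> h * of_int (\<sigma> g) * (if st g \<otimes> h = x then 1 else (0::'f)))"
  proof (intro sum.cong refl)
    fix g h assume g: "g \<in> ?S" and h: "h \<in> ?S"
    have gc: "g \<in> carrier G" and hc: "h \<in> carrier G" using g h sub by auto
    have Rg: "Rel g (st h)" using R gc hc st_closed by blast
    have I: "(of_int (\<sigma> h) :: 'f) * (if g \<otimes> st h = x then 1 else 0) + of_int (\<sigma> g) * (if h \<otimes> st g = x then 1 else 0) =
         of_int (\<sigma> h) * (if st h \<otimes> g = x then 1 else 0) + of_int (\<sigma> g) * (if st g \<otimes> h = x then 1 else 0)"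
      by (rule Id_lemma[OF gc hc Rg])
    have "\<alpha> g * \<alpha> h * of_int (\<sigma> h) * (if g \<otimes> st h = x then 1 else (0::'f))
         + \<alpha> g * \<alpha> h * of_int (\<sigma> g) * (if h \<otimes> st g = x then 1 else (0::'f)) =
         \<alpha> g * \<alpha> h * ((of_int (\<sigma> h) :: 'f) * (if g \<otimes> st h = x then 1 else 0) + of_int (\<sigma> g) * (if h \<otimes> st g = x then 1 else 0))"
      by (rule dist4)
    also have "\<dots> = \<alpha> g * \<alpha> h * (of_int (\<sigma> h) * (if st h \<otimes> g = x then 1 else 0) + of_int (\<sigma> g) * (if st g \<otimes> h = x then 1 else 0))"
      by (simp only: I)
    also have "\<dots> = \<alpha> g * \<alpha> h * of_int (\<sigma> h) * (if st h \<otimes> g = x then 1 else (0::'f))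
         + \<alpha> g * \<alpha> h * of_int (\<sigma> g) * (if st g \<otimes> h = x then 1 else (0::'f))"
      by (rule dist4[symmetric])
    finally show "\<alpha> g * \<alpha> h * of_int (\<sigma> h) * (if g \<otimes> st h = x then 1 else (0::'f))
         + \<alpha> g * \<alpha> h * of_int (\<sigma> g) * (if h \<otimes> st g = x then 1 else (0::'f)) =
         \<alpha> g * \<alpha> h * of_int (\<sigma> h) * (if st h \<otimes> g = x then 1 else (0::'f))
         + \<alpha> g * \<alpha> h * of_int (\<sigma> g) * (if st g \<otimes> h = x then 1 else (0::'f))" .
  qed
  also have "\<dots> = R0 + R'" unfolding R0_def R'_def by (simp only: sum.distrib)
  finally have "L + L' = R0 + R'" .
  then have "L + L = R0 + R0" by (simp only: LL RR)
  then have "2 * L = 2 * R0" by (simp only: mult_2)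
  then have "L = R0" using two mult_left_cancel by blast
  then show "(\<Sum>g\<in>?S. \<Sum>h\<in>?S. \<alpha> g * \<alpha> h * of_int (\<sigma> h) * (if g \<otimes> st h = x then 1 else 0)) =
     (\<Sum>g\<in>?S. \<Sum>h\<in>?S. \<alpha> g * \<alpha> h * of_int (\<sigma> h) * (if st h \<otimes> g = x then 1 else 0))"
    unfolding L_def R0_def .
qed

end


context oset
begin

lemma P1_from_normal:
  assumes N: "ga_normal G st \<sigma> (group_algebra G :: ('a \<Rightarrow> 'f::field) set)" and u: "u \<in> carrier G"
  shows "u \<otimes> st u = st u \<otimes> u"
proof -
  define \<alpha> where "\<alpha> = (\<lambda>y. if y = u then (1::'f) else 0)"
  have supp: "supp \<alpha> = {u}" unfolding supp_def \<alpha>_def by auto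
  have A: "\<alpha> \<in> group_algebra G" unfolding group_algebra_def using supp u unfolding supp_def \<alpha>_def by auto
  have x: "u \<otimes> st u \<in> carrier G" using u by simp
  have "(\<Sum>g\<in>supp \<alpha>. \<Sum>h\<in>supp \<alpha>. \<alpha> g * \<alpha> h * of_int (\<sigma> h) * (if g \<otimes> st h = u \<otimes> st u then 1 else 0)) =
     (\<Sum>g\<in>supp \<alpha>. \<Sum>h\<in>supp \<alpha>. \<alpha> g * \<alpha> h * of_int (\<sigma> h) * (if st h \<otimes> g = u \<otimes> st u then 1 else 0))"
    using N A x unfolding normal_iff_LR by blast
  then have "(of_int (\<sigma> u) :: 'f) = of_int (\<sigma> u) * (if st u \<otimes> u = u \<otimes> st u then 1 else 0)"
    unfolding supp by (simp add: \<alpha>_def)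
  moreover have "(of_int (\<sigma> u) :: 'f) \<noteq> 0" using sig_pm[OF u] by auto
  ultimately show ?thesis by (cases "st u \<otimes> u = u \<otimes> st u") auto
qed

lemma Rel_from_normal:
  assumes two: "(2::'f::field) \<noteq> 0"
    and N: "ga_normal G st \<sigma> (group_algebra G :: ('a \<Rightarrow> 'f) set)"
    and g: "g \<in> carrier G" and h: "h \<in> carrier G"
  shows "Rel g h"
proof (cases "g = st h")
  case True
  then have "g \<otimes> h = h \<otimes> g" using P1_from_normal[OF N h] h by (metis st_st)
  then show ?thesis unfolding Rel_def by simp
next
  case gk: False
  have kc: "st h \<in> carrier G" and stk: "st (st h) = h" and sk: "\<sigma> (st h) = \<sigma> h" using h by auto
  have gk': "g \<noteq> st h" using gk .
  define \<alpha> where "\<alpha> = (\<lambda>y. if y = g \<or> y = st h then (1::'f) else 0)"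
  have supp: "supp \<alpha> = {g, st h}" unfolding supp_def \<alpha>_def by auto
  have A: "\<alpha> \<in> group_algebra G" unfolding group_algebra_def using supp g kc unfolding supp_def \<alpha>_def by auto
  have ag: "\<alpha> g = 1" and ak: "\<alpha> (st h) = 1" unfolding \<alpha>_def by auto
  have P1g: "g \<otimes> st g = st g \<otimes> g" using P1_from_normal[OF N g] .
  have P1h: "h \<otimes> st h = st h \<otimes> h" using P1_from_normal[OF N h] .
  have E: "(of_int (\<sigma> h) :: 'f) * (if g \<otimes> h = x then 1 else 0) + of_int (\<sigma> g) * (if st h \<otimes> st g = x then 1 else 0) =
           of_int (\<sigma> h) * (if h \<otimes> g = x then 1 else 0) + of_int (\<sigma> g) * (if st g \<otimes> st h = x then 1 else 0)"
    if x: "x \<in> carrier G" for x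
  proof -
    have "(\<Sum>u\<in>supp \<alpha>. \<Sum>v\<in>supp \<alpha>. \<alpha> u * \<alpha> v * of_int (\<sigma> v) * (if u \<otimes> st v = x then 1 else 0)) =
       (\<Sum>u\<in>supp \<alpha>. \<Sum>v\<in>supp \<alpha>. \<alpha> u * \<alpha> v * of_int (\<sigma> v) * (if st v \<otimes> u = x then 1 else (0::'f)))"
      using N A x unfolding normal_iff_LR by blast
    then have "\<alpha> g * \<alpha> g * of_int (\<sigma> g) * (if g \<otimes> st g = x then 1 else 0)
      + \<alpha> g * \<alpha> (st h) * of_int (\<sigma> (st h)) * (if g \<otimes> st (st h) = x then 1 else 0)
      + \<alpha> (st h) * \<alpha> g * of_int (\<sigma> g) * (if st h \<otimes> st g = x then 1 else 0)
      + \<alpha> (st h) * \<alpha> (st h) * of_int (\<sigma> (st h)) * (if st h \<otimes> st (st h) = x then 1 else 0) =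
      \<alpha> g * \<alpha> g * of_int (\<sigma> g) * (if st g \<otimes> g = x then 1 else 0)
      + \<alpha> g * \<alpha> (st h) * of_int (\<sigma> (st h)) * (if st (st h) \<otimes> g = x then 1 else 0)
      + \<alpha> (st h) * \<alpha> g * of_int (\<sigma> g) * (if st g \<otimes> st h = x then 1 else 0)
      + \<alpha> (st h) * \<alpha> (st h) * of_int (\<sigma> (st h)) * (if st (st h) \<otimes> st h = (x::'a) then 1 else (0::'f))"
      unfolding supp sum2[OF gk'] .
    then have "of_int (\<sigma> g) * (if st g \<otimes> g = x then 1 else 0)
      + of_int (\<sigma> h) * (if g \<otimes> h = x then 1 else 0)
      + of_int (\<sigma> g) * (if st h \<otimes> st g = x then 1 else 0)
      + of_int (\<sigma> h) * (if st h \<otimes> h = x then 1 else 0) =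
      of_int (\<sigma> g) * (if st g \<otimes> g = x then 1 else 0)
      + of_int (\<sigma> h) * (if h \<otimes> g = x then 1 else 0)
      + of_int (\<sigma> g) * (if st g \<otimes> st h = x then 1 else 0)
      + of_int (\<sigma> h) * (if st h \<otimes> h = x then 1 else (0::'f))"
      unfolding ag ak stk sk P1g P1h mult_1_left .
    then show ?thesis by (rule cancel4)
  qed
  show ?thesis
  proof (cases "g \<otimes> h = h \<otimes> g")
    case True then show ?thesis unfolding Rel_def by simp
  next
    case nc: False
    have gh: "g \<otimes> h \<in> carrier G" and hg: "h \<otimes> g \<in> carrier G" using g h by auto
    have E1: "(of_int (\<sigma> h) :: 'f) + of_int (\<sigma> g) * (if st h \<otimes> st g = g \<otimes> h then 1 else 0) =
              of_int (\<sigma> g) * (if st g \<otimes> st h = g \<otimes> h then 1 else 0)"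
      using E[OF gh] nc by simp
    have E2: "(of_int (\<sigma> g) :: 'f) * (if st h \<otimes> st g = h \<otimes> g then 1 else 0) =
              of_int (\<sigma> h) + of_int (\<sigma> g) * (if st g \<otimes> st h = h \<otimes> g then 1 else 0)"
      using E[OF hg] nc by (simp add: eq_commute[of "g \<otimes> h" "h \<otimes> g"])
    note c1 = field_cases1[OF two sig_pm[OF g] sig_pm[OF h] E1]
    note c2 = field_cases2[OF two sig_pm[OF g] sig_pm[OF h] E2]
    show ?thesis
    proof (cases "\<sigma> g = \<sigma> h")
      case True
      then show ?thesis using c1 c2 unfolding Rel_def by auto
    next
      case False
      then have "st (g \<otimes> h) = g \<otimes> h" "st (h \<otimes> g) = h \<otimes> g" using c1 c2 st_mult g h by auto
      then show ?thesis using False unfolding Rel_def by auto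
    qed
  qed
qed

end


context oset
begin

lemma cond1_allR:
  assumes ab: "abelian_on G N" and fx: "\<forall>a \<in> carrier G - N. st a = a"
    and cj: "\<forall>n \<in> N. \<forall>a \<in> carrier G - N. st n = inv a \<otimes> n \<otimes> a \<and> st n = a \<otimes> n \<otimes> inv a"
  shows "\<forall>g\<in>carrier G. \<forall>h\<in>carrier G. Rel g h"
proof (intro ballI)
  fix g h assume g: "g \<in> carrier G" and h: "h \<in> carrier G"
  show "Rel g h"
  proof (cases "g \<in> N")
    case gN: True
    show ?thesis
    proof (cases "h \<in> N")
      case True
      then have "g \<otimes> h = h \<otimes> g" using ab gN unfolding abelian_on_def by blast
      then show ?thesis unfolding Rel_def by simp
    next
      case hN: False
      have sg: "\<sigma> g \<noteq> \<sigma> h" using gN hN g h by (simp add: inN notN)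
      have sth: "st h = h" using fx h hN by blast
      have "st g = inv h \<otimes> g \<otimes> h \<and> st g = h \<otimes> g \<otimes> inv h" using cj gN h hN by blast
      then have e1: "st g = inv h \<otimes> g \<otimes> h" and e2: "st g = h \<otimes> g \<otimes> inv h" by auto
      have "st (g \<otimes> h) = h \<otimes> (inv h \<otimes> g \<otimes> h)" using st_mult[OF g h] sth e1 by simp
      also have "\<dots> = g \<otimes> h" using g h by (simp add: m_assoc)
      finally have 1: "st (g \<otimes> h) = g \<otimes> h" .
      have "st (h \<otimes> g) = (h \<otimes> g \<otimes> inv h) \<otimes> h" using st_mult[OF h g] sth e2 by simp
      also have "\<dots> = h \<otimes> g" using g h by (simp add: m_assoc)
      finally have 2: "st (h \<otimes> g) = h \<otimes> g" .
      show ?thesis using sg 1 2 unfolding Rel_def by simp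
    qed
  next
    case gN: False
    have stg: "st g = g" using fx g gN by blast
    show ?thesis
    proof (cases "h \<in> N")
      case hN: True
      have sg: "\<sigma> g \<noteq> \<sigma> h" using gN hN g h by (simp add: inN notN)
      have "st h = inv g \<otimes> h \<otimes> g \<and> st h = g \<otimes> h \<otimes> inv g" using cj hN g gN by blast
      then have e1: "st h = inv g \<otimes> h \<otimes> g" and e2: "st h = g \<otimes> h \<otimes> inv g" by auto
      have "st (g \<otimes> h) = (g \<otimes> h \<otimes> inv g) \<otimes> g" using st_mult[OF g h] stg e2 by simp
      also have "\<dots> = g \<otimes> h" using g h by (simp add: m_assoc)
      finally have 1: "st (g \<otimes> h) = g \<otimes> h" .
      have "st (h \<otimes> g) = g \<otimes> (inv g \<otimes> h \<otimes> g)" using st_mult[OF h g] stg e1 by simp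
      also have "\<dots> = h \<otimes> g" using g h by (simp add: m_assoc)
      finally have 2: "st (h \<otimes> g) = h \<otimes> g" .
      show ?thesis using sg 1 2 unfolding Rel_def by simp
    next
      case hN: False
      have sth: "st h = h" using fx h hN by blast
      have "\<sigma> g = \<sigma> h" using gN hN g h by (simp add: notN)
      then show ?thesis using stg sth unfolding Rel_def by simp
    qed
  qed
qed

lemma cond2_allR:
  assumes s1: "s \<noteq> \<one>" and cs: "commutators G = {\<one>, s}"
    and fm: "\<forall>g \<in> carrier G. st g =
            (if g \<in> N \<inter> grp_center G (carrier G) \<or> g \<in> (carrier G - N) - grp_center G (carrier G)
             then g else s \<otimes> g)"
  shows "\<forall>g\<in>carrier G. \<forall>h\<in>carrier G. Rel g h"
proof -
  have "s \<in> commutators G" using cs by simp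
  then obtain a b where ab: "a \<in> carrier G" "b \<in> carrier G" "s = commutator G a b"
    unfolding commutators_def by blast
  have sc: "s \<in> carrier G" using ab commutator_closed by simp
  have scomm: "x \<otimes> s = s \<otimes> x" if x: "x \<in> carrier G" for x
  proof -
    have "commutator G x s \<in> commutators G" unfolding commutators_def using x sc by blast
    then have "commutator G x s = \<one> \<or> commutator G x s = s" using cs by simp
    then show ?thesis
    proof
      assume "commutator G x s = \<one>" then show ?thesis using commutator_one x sc by blast
    next
      assume "commutator G x s = s" then have "s = \<one>" using commutator_self x sc by blast
      then show ?thesis using s1 by simp
    qed
  qed
  have ss: "s \<otimes> s = \<one>"
  proof -
    have "commutator G b a \<in> commutators G" unfolding commutators_def using ab by blast
    moreover have "commutator G b a = inv s" using commutator_swap[of a b] ab by simp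
    ultimately have "inv s = \<one> \<or> inv s = s" using cs by simp
    moreover have "inv s \<noteq> \<one>" using s1 sc by simp
    ultimately have "inv s = s" by simp
    then show ?thesis using sc r_inv[of s] by simp
  qed
  have sleft: "x \<otimes> (s \<otimes> y) = s \<otimes> (x \<otimes> y)" if "x \<in> carrier G" "y \<in> carrier G" for x y
  proof -
    have "x \<otimes> (s \<otimes> y) = (x \<otimes> s) \<otimes> y" using that sc by (simp add: m_assoc)
    also have "\<dots> = (s \<otimes> x) \<otimes> y" using scomm[OF that(1)] by simp
    also have "\<dots> = s \<otimes> (x \<otimes> y)" using that sc by (simp add: m_assoc)
    finally show ?thesis .
  qed
  have sss: "s \<otimes> (s \<otimes> y) = y" if "y \<in> carrier G" for y
    using ss that sc by (simp add: m_assoc[symmetric])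
  have fnz: "st x = (if x \<in> N then s \<otimes> x else x)" if "x \<in> carrier G" "x \<notin> grp_center G (carrier G)" for x
    using fm that by auto
  show ?thesis
  proof (intro ballI)
    fix g h assume g: "g \<in> carrier G" and h: "h \<in> carrier G"
    show "Rel g h"
    proof (cases "g \<otimes> h = h \<otimes> g")
      case True then show ?thesis unfolding Rel_def by simp
    next
      case nc: False
      have gZ: "g \<notin> grp_center G (carrier G)" using zc_comm nc h by blast
      have hZ: "h \<notin> grp_center G (carrier G)" using zc_comm nc g by metis
      have ghZ: "g \<otimes> h \<notin> grp_center G (carrier G)" using zc_prod_comm nc g h by blast
      have hgZ: "h \<otimes> g \<notin> grp_center G (carrier G)" using zc_prod_comm nc g h by metis
      show ?thesis
      proof (cases "\<sigma> g = \<sigma> h")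
        case True
        show ?thesis
        proof (cases "g \<in> N")
          case gN: True
          then have hN: "h \<in> N" using True g h by (simp add: inN)
          have stg: "st g = s \<otimes> g" and sth: "st h = s \<otimes> h" using fnz g h gZ hZ gN hN by auto
          have 1: "st g \<otimes> st h = g \<otimes> h" using stg sth sleft[of g "s \<otimes> h"] sleft[of g h] sss g h sc
            by (simp add: m_assoc)
          have 2: "st h \<otimes> st g = h \<otimes> g" using stg sth sleft[of h "s \<otimes> g"] sleft[of h g] sss g h sc
            by (simp add: m_assoc)
          show ?thesis using True 1 2 unfolding Rel_def by simp
        next
          case gN: False
          then have hN: "h \<notin> N" using True g h by (simp add: inN)
          have "st g = g" "st h = h" using fnz g h gZ hZ gN hN by auto
          then show ?thesis using True unfolding Rel_def by simp
        qed
      next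
        case False
        have "g \<otimes> h \<notin> N" "h \<otimes> g \<notin> N" using False g h sig_pm[OF g] sig_pm[OF h] by (auto simp: inN)
        then have "st (g \<otimes> h) = g \<otimes> h" "st (h \<otimes> g) = h \<otimes> g" using fnz g h ghZ hgZ by auto
        then show ?thesis using False unfolding Rel_def by simp
      qed
    qed
  qed
qed

end


context oset
begin

lemma conds_from_allR:
  assumes nonab: "\<not> abelian_on G (carrier G)" and nontriv: "\<exists>g\<in>carrier G. \<sigma> g \<noteq> 1"
    and R: "\<forall>g\<in>carrier G. \<forall>h\<in>carrier G. Rel g h"
  shows "(abelian_on G N \<and> (\<forall>a \<in> carrier G - N. st a = a) \<and>
       (\<forall>n \<in> N. \<forall>a \<in> carrier G - N.
          st n = inv a \<otimes> n \<otimes> a \<and> st n = a \<otimes> n \<otimes> inv a))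
     \<or>
      (LC_group G N \<and> LC_group G (carrier G) \<and>
       (\<exists>s. s \<noteq> \<one> \<and> commutators G = {\<one>, s} \<and>
         (\<exists>g0 \<in> (carrier G - N) \<inter> grp_center G (carrier G). st g0 = s \<otimes> g0) \<and>
         (\<forall>g \<in> carrier G. st g =
            (if g \<in> N \<inter> grp_center G (carrier G) \<or> g \<in> (carrier G - N) - grp_center G (carrier G)
             then g else s \<otimes> g))))"
proof -
  interpret R: oset_rel G st \<sigma> N by unfold_locales (rule R)
  show ?thesis
  proof (cases "abelian_on G N")
    case True
    then show ?thesis using R.caseI nonab by blast
  next
    case False
    interpret C: caseII G st \<sigma> N by unfold_locales (rule False, rule nontriv)
    show ?thesis using C.cond2 by blast
  qed
qed

lemma allR_from_conds:
  assumes "(abelian_on G N \<and> (\<forall>a \<in> carrier G - N. st a = a) \<and>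
       (\<forall>n \<in> N. \<forall>a \<in> carrier G - N.
          st n = inv a \<otimes> n \<otimes> a \<and> st n = a \<otimes> n \<otimes> inv a))
     \<or>
      (LC_group G N \<and> LC_group G (carrier G) \<and>
       (\<exists>s. s \<noteq> \<one> \<and> commutators G = {\<one>, s} \<and>
         (\<exists>g0 \<in> (carrier G - N) \<inter> grp_center G (carrier G). st g0 = s \<otimes> g0) \<and>
         (\<forall>g \<in> carrier G. st g =
            (if g \<in> N \<inter> grp_center G (carrier G) \<or> g \<in> (carrier G - N) - grp_center G (carrier G)
             then g else s \<otimes> g))))"
  shows "\<forall>g\<in>carrier G. \<forall>h\<in>carrier G. Rel g h"
  using assms cond1_allR cond2_allR by blast

end

theorem theorem5:
  fixes G :: "('a, 'b) monoid_scheme" and st :: "'a \<Rightarrow> 'a" and \<sigma> :: "'a \<Rightarrow> int"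
  assumes "group G"
    and char: "(2::'f::field) \<noteq> 0"
    and nonab: "\<not> abelian_on G (carrier G)"
    and inv: "group_involution G st"
    and ori: "orientation G \<sigma>"
    and nontriv: "\<exists>g \<in> carrier G. \<sigma> g \<noteq> 1"
    and N_def: "N = {g \<in> carrier G. \<sigma> g = 1}"
    and ggst: "\<forall>g \<in> carrier G. g \<otimes>\<^bsub>G\<^esub> st g \<in> N"
  shows "ga_normal G st \<sigma> (group_algebra G :: ('a \<Rightarrow> 'f) set) \<longleftrightarrow>
     ((abelian_on G N \<and> (\<forall>a \<in> carrier G - N. st a = a) \<and>
       (\<forall>n \<in> N. \<forall>a \<in> carrier G - N.
          st n = inv\<^bsub>G\<^esub> a \<otimes>\<^bsub>G\<^esub> n \<otimes>\<^bsub>G\<^esub> a \<and> st n = a \<otimes>\<^bsub>G\<^esub> n \<otimes>\<^bsub>G\<^esub> inv\<^bsub>G\<^esub> a))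
     \<or>
      (LC_group G N \<and> LC_group G (carrier G) \<and>
       (\<exists>s. s \<noteq> \<one>\<^bsub>G\<^esub> \<and> commutators G = {\<one>\<^bsub>G\<^esub>, s} \<and>
         (\<exists>g0 \<in> (carrier G - N) \<inter> grp_center G (carrier G). st g0 = s \<otimes>\<^bsub>G\<^esub> g0) \<and>
         (\<forall>g \<in> carrier G. st g =
            (if g \<in> N \<inter> grp_center G (carrier G) \<or> g \<in> (carrier G - N) - grp_center G (carrier G)
             then g else s \<otimes>\<^bsub>G\<^esub> g)))))"
proof -
  interpret O: oset G st \<sigma> N
    by (rule oset.intro[OF assms(1)], unfold_locales) (use inv ori N_def ggst in auto)
  have "ga_normal G st \<sigma> (group_algebra G :: ('a \<Rightarrow> 'f) set) \<longleftrightarrow> (\<forall>g\<in>carrier G. \<forall>h\<in>carrier G. O.Rel g h)"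
    using O.normal_from_Rel[OF char] O.Rel_from_normal[OF char] by blast
  then show ?thesis using O.conds_from_allR[OF nonab nontriv] O.allR_from_conds by blast
qed

end
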